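(* Let $(X_{s,t})$ be the INMA$(q_1,q_2)$ random field defined in the context with Poisson innovations $\varepsilon_{s,t}\sim\mathrm{Poi}(\mu_\varepsilon)$, $\mu_\varepsilon>0$, let $0\le k\le q_1$, $0\le l\le q_2$, $\rho(k,l)=\frac{1}{\beta_\bullet}\sum_{i=k}^{q_1}\sum_{j=l}^{q_2}p_{(i,j),(i-k,j-l)}$ and $m:=2\mu_\varepsilon\beta_\bullet(1-\rho(k,l))$. Then for every $j\in\mathbb{N}_0$, $$\mathbb{P}(X_{s,t}=X_{s-k,t-l}+j)=\mathbb{P}(X_{s,t}=X_{s-k,t-l}-j)=e^{-m}I_j(m),$$ where $I_j(z)=\sum_{r=0}^\infty (z/2)^{2r+j}/(r!\,(r+j)!)$ is the modified Bessel function of the first kind. Consequently $$\mathbb{P}(X_{s,t}<X_{s-k,t-l})=\mathbb{P}(X_{s,t}>X_{s-k,t-l})=\tfrac12\big[1-e^{-m}I_0(m)\big].$$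
   Context: INMA$(q_1,q_2)$ random field: Fix $q_1,q_2\in\mathbb{N}_0$ with $q_1+q_2\ge 1$ and parameters $\beta_{ij}\in[0,1]$ for $0\le i\le q_1$, $0\le j\le q_2$, not all zero; put $\beta_\bullet=\sum_{i=0}^{q_1}\sum_{j=0}^{q_2}\beta_{ij}$. Let $(\varepsilon_{s,t})_{s,t\in\mathbb{Z}}$ be i.i.d. random variables with values in $\mathbb{N}_0$. Let $\mathbf{Z}_{s,t;r}=(Z^{(i,j)}_{s,t;r})_{0\le i\le q_1,0\le j\le q_2}$, $s,t\in\mathbb{Z}$, $r\in\mathbb{N}$, be i.i.d. random vectors (distributed as a generic vector $\mathbf{Z}=(Z^{(i,j)})$), independent of $(\varepsilon_{s,t})$, whose components are Bernoulli with $\mathbb{P}(Z^{(i,j)}=1)=\beta_{ij}$; the components within one vector may be arbitrarily dependent. Write $p_{(i,j),(i',j')}:=\mathbb{P}(Z^{(i,j)}=1,\,Z^{(i',j')}=1)$. The field is $X_{s,t}=\sum_{i=0}^{q_1}\sum_{j=0}^{q_2}\sum_{r=1}^{\varepsilon_{s-i,t-j}}Z^{(i,j)}_{s-i,t-j;r}$. *)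

theory Defs
  imports "HOL-Probability.Probability"
begin

definition besselI :: "nat \<Rightarrow> real \<Rightarrow> real" where
  "besselI j z = (\<Sum>r. (z / 2) ^ (2 * r + j) / (fact r * fact (r + j)))"

text \<open>The INMA(q1,q2) field: eps (s,t) are the innovations,
  Z (s,t,r) (i,j) is the component Z^{(i,j)}_{s,t;r}.\<close>
definition inma_X ::
  "nat \<Rightarrow> nat \<Rightarrow> (int \<times> int \<Rightarrow> 'a \<Rightarrow> nat) \<Rightarrow> (int \<times> int \<times> nat \<Rightarrow> nat \<times> nat \<Rightarrow> 'a \<Rightarrow> nat)
   \<Rightarrow> int \<Rightarrow> int \<Rightarrow> 'a \<Rightarrow> nat" where
  "inma_X q1 q2 eps Z s t \<omega> =
     (\<Sum>i\<le>q1. \<Sum>j\<le>q2. \<Sum>r\<in>{1..eps (s - int i, t - int j) \<omega>}. Z (s - int i, t - int j, r) (i, j) \<omega>)"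

definition Zvec ::
  "nat \<Rightarrow> nat \<Rightarrow> (int \<times> int \<times> nat \<Rightarrow> nat \<times> nat \<Rightarrow> 'a \<Rightarrow> nat) \<Rightarrow> int \<times> int \<times> nat \<Rightarrow> 'a \<Rightarrow> (nat \<times> nat \<Rightarrow> nat)" where
  "Zvec q1 q2 Z str \<omega> = (\<lambda>ij\<in>{..q1} \<times> {..q2}. Z str ij \<omega>)"

text \<open>p_{(i,j),(i',j')} computed from the generic vector Z = Z_{0,0;1}
  (all vectors are identically distributed).\<close>
definition inma_p ::
  "'a measure \<Rightarrow> (int \<times> int \<times> nat \<Rightarrow> nat \<times> nat \<Rightarrow> 'a \<Rightarrow> nat) \<Rightarrow> nat \<times> nat \<Rightarrow> nat \<times> nat \<Rightarrow> real" where
  "inma_p M Z a b = measure M {\<omega> \<in> space M. Z (0, 0, 1) a \<omega> = 1 \<and> Z (0, 0, 1) b \<omega> = 1}"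

definition beta_bullet :: "nat \<Rightarrow> nat \<Rightarrow> (nat \<Rightarrow> nat \<Rightarrow> real) \<Rightarrow> real" where
  "beta_bullet q1 q2 \<beta> = (\<Sum>i\<le>q1. \<Sum>j\<le>q2. \<beta> i j)"

definition inma_rho ::
  "'a measure \<Rightarrow> nat \<Rightarrow> nat \<Rightarrow> (nat \<Rightarrow> nat \<Rightarrow> real) \<Rightarrow> (int \<times> int \<times> nat \<Rightarrow> nat \<times> nat \<Rightarrow> 'a \<Rightarrow> nat)
    \<Rightarrow> nat \<Rightarrow> nat \<Rightarrow> real" where
  "inma_rho M q1 q2 \<beta> Z k l =
     (1 / beta_bullet q1 q2 \<beta>) * (\<Sum>i\<in>{k..q1}. \<Sum>j\<in>{l..q2}. inma_p M Z (i, j) (i - k, j - l))"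

end

theory Submission
  imports Defs "HOL-Library.Product_Plus"
begin


definition poi :: "real \<Rightarrow> nat pmf" where
  "poi r = (if r \<le> 0 then return_pmf 0 else poisson_pmf r)"

lemma pmf_poi: assumes "0 \<le> r" shows "pmf (poi r) n = r ^ n / fact n * exp (- r)"
proof (cases "r = 0")
  case True thus ?thesis by (cases n) (auto simp: poi_def indicator_def)
next
  case False thus ?thesis using assms by (auto simp: poi_def)
qed

lemma pmf_bind_nat:
  fixes P :: "nat pmf"
  shows "(\<lambda>n. pmf P n * pmf (F n) x) sums pmf (bind_pmf P F) x"
proof -
  have "ennreal (pmf (bind_pmf P F) x) = (\<integral>\<^sup>+ n. ennreal (pmf (F n) x) \<partial>measure_pmf P)"
    by (rule ennreal_pmf_bind)
  also have "\<dots> = (\<integral>\<^sup>+ n. ennreal (pmf P n) * ennreal (pmf (F n) x) \<partial>count_space UNIV)"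
    by (rule nn_integral_measure_pmf)
  also have "\<dots> = (\<Sum>n. ennreal (pmf P n * pmf (F n) x))"
    by (simp add: nn_integral_count_space_nat ennreal_mult)
  finally have e: "(\<Sum>n. ennreal (pmf P n * pmf (F n) x)) = ennreal (pmf (bind_pmf P F) x)" by simp
  have s: "summable (\<lambda>n. pmf P n * pmf (F n) x)"
    by (rule summable_suminf_not_top) (use e in auto)
  have "ennreal (\<Sum>n. pmf P n * pmf (F n) x) = ennreal (pmf (bind_pmf P F) x)"
    using suminf_ennreal2[OF _ s] e by simp
  hence "(\<Sum>n. pmf P n * pmf (F n) x) = pmf (bind_pmf P F) x"
    by (subst (asm) ennreal_inj) (auto intro: suminf_nonneg s)
  thus ?thesis using s summable_sums by metis
qed

definition tri :: "real \<Rightarrow> real \<Rightarrow> real \<Rightarrow> nat \<Rightarrow> nat \<Rightarrow> nat \<Rightarrow> real" where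
  "tri p q r n x y = (if x + y \<le> n then fact n / (fact x * fact y * fact (n - x - y)) * p^x * q^y * r^(n-x-y) else 0)"

lemma tri_rec:
  "tri p q r (Suc n) x y = r * tri p q r n x y + (if x > 0 then p * tri p q r n (x-1) y else 0)
     + (if y > 0 then q * tri p q r n x (y-1) else 0)"
proof (cases "x + y \<le> Suc n")
  case False thus ?thesis by (auto simp: tri_def)
next
  case True
  define k where "k = Suc n - x - y"
  define c where "c = fact n / (fact x * fact y * fact k) * p^x * q^y * r^k"
  have L: "tri p q r (Suc n) x y = (Suc n) * c"
    using True by (simp add: tri_def c_def k_def)
  have A: "r * tri p q r n x y = k * c"
  proof (cases k)
    case 0 thus ?thesis using True by (auto simp: tri_def k_def)
  next
    case (Suc k')
    have "x + y \<le> n" "n - x - y = k'" using Suc True by (auto simp: k_def)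
    hence t: "tri p q r n x y = fact n / (fact x * fact y * fact k') * p^x * q^y * r^k'" by (simp add: tri_def)
    have f: "fact k = real k * fact k'" and rk: "r^k = r * r^k'" and kp: "real k > 0" using Suc by auto
    have "k * c = k * (fact n / (fact x * fact y * (real k * fact k')) * p^x * q^y * (r * r^k'))"
      unfolding c_def f rk ..
    also have "\<dots> = r * tri p q r n x y" unfolding t using kp by (simp add: field_simps)
    finally show ?thesis ..
  qed
  have B: "(if x > 0 then p * tri p q r n (x-1) y else 0) = x * c"
  proof (cases x)
    case 0 thus ?thesis by simp
  next
    case (Suc x')
    have "x' + y \<le> n" "n - x' - y = k" using Suc True by (auto simp: k_def)
    hence t: "tri p q r n x' y = fact n / (fact x' * fact y * fact k) * p^x' * q^y * r^k" by (simp add: tri_def)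
    have f: "fact x = real x * fact x'" and rk: "p^x = p * p^x'" and kp: "real x > 0" using Suc by auto
    have "x * c = x * (fact n / ((real x * fact x') * fact y * fact k) * (p * p^x') * q^y * r^k)"
      unfolding c_def f rk ..
    also have "\<dots> = p * tri p q r n x' y" unfolding t using kp by (simp add: field_simps)
    finally show ?thesis using Suc by simp
  qed
  have C: "(if y > 0 then q * tri p q r n x (y-1) else 0) = y * c"
  proof (cases y)
    case 0 thus ?thesis by simp
  next
    case (Suc y')
    have "x + y' \<le> n" "n - x - y' = k" using Suc True by (auto simp: k_def)
    hence t: "tri p q r n x y' = fact n / (fact x * fact y' * fact k) * p^x * q^y' * r^k" by (simp add: tri_def)
    have f: "fact y = real y * fact y'" and rk: "q^y = q * q^y'" and kp: "real y > 0" using Suc by auto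
    have "y * c = y * (fact n / (fact x * (real y * fact y') * fact k) * p^x * (q * q^y') * r^k)"
      unfolding c_def f rk ..
    also have "\<dots> = q * tri p q r n x y'" unfolding t using kp by (simp add: field_simps)
    finally show ?thesis using Suc by simp
  qed
  have "real (Suc n) = real k + real x + real y" using True by (simp add: k_def)
  thus ?thesis using L A B C by (simp add: algebra_simps)
qed

lemma tri_poisson:
  assumes "p + q + r = 1"
  shows "(\<lambda>n. \<mu>^n / fact n * exp (-\<mu>) * tri p q r n x y) sums
           (((\<mu>*p)^x / fact x * exp (-(\<mu>*p))) * ((\<mu>*q)^y / fact y * exp (-(\<mu>*q))))"
proof -
  define K where "K = exp (-\<mu>) * (\<mu>*p)^x / fact x * ((\<mu>*q)^y / fact y)"
  have e: "(\<lambda>k. (\<mu>*r)^k / fact k) sums exp (\<mu>*r)"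
    using exp_converges[of "\<mu>*r"] by (simp add: divide_inverse mult.commute)
  have "(\<lambda>k. K * ((\<mu>*r)^k / fact k)) sums (K * exp (\<mu>*r))"
    by (rule sums_mult[OF e])
  moreover have "(\<lambda>k. \<mu>^(k + (x+y)) / fact (k + (x+y)) * exp (-\<mu>) * tri p q r (k + (x+y)) x y)
      = (\<lambda>k. K * ((\<mu>*r)^k / fact k))"
  proof
    fix k
    have "k + (x + y) - x - y = k" by simp
    hence "tri p q r (k + (x+y)) x y = fact (k + (x+y)) / (fact x * fact y * fact k) * p^x * q^y * r^k"
      by (simp add: tri_def)
    moreover have "\<mu>^(k + (x+y)) = \<mu>^k * \<mu>^x * \<mu>^y" by (simp add: power_add)
    ultimately show "\<mu>^(k + (x+y)) / fact (k + (x+y)) * exp (-\<mu>) * tri p q r (k + (x+y)) x y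
       = K * ((\<mu>*r)^k / fact k)"
      by (simp add: K_def power_mult_distrib field_simps)
  qed
  ultimately have "(\<lambda>k. \<mu>^(k + (x+y)) / fact (k + (x+y)) * exp (-\<mu>) * tri p q r (k + (x+y)) x y)
      sums (K * exp (\<mu>*r))" by simp
  hence "(\<lambda>n. \<mu>^n / fact n * exp (-\<mu>) * tri p q r n x y) sums (K * exp (\<mu>*r))"
    by (subst (asm) sums_zero_iff_shift) (auto simp: tri_def)
  moreover have "K * exp (\<mu>*r) = ((\<mu>*p)^x / fact x * exp (-(\<mu>*p))) * ((\<mu>*q)^y / fact y * exp (-(\<mu>*q)))"
  proof -
    have "\<mu> * (p + q + r) = \<mu>" using assms by simp
    hence "-\<mu> + \<mu>*r = -(\<mu>*p) + -(\<mu>*q)" by (simp add: algebra_simps)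
    hence "exp (-\<mu>) * exp (\<mu>*r) = exp (-(\<mu>*p)) * exp (-(\<mu>*q))"
      by (simp add: exp_add[symmetric])
    thus ?thesis unfolding K_def by (simp add: field_simps)
  qed
  ultimately show ?thesis by simp
qed

lemma pmf_map_add_pair:
  fixes T :: "(nat \<times> nat) pmf"
  shows "pmf (map_pmf (\<lambda>b. (1,0) + b) T) (x,y) = (if x > 0 then pmf T (x-1,y) else 0)"
    and "pmf (map_pmf (\<lambda>b. (0,1) + b) T) (x,y) = (if y > 0 then pmf T (x,y-1) else 0)"
    and "pmf (map_pmf (\<lambda>b. (0,0) + b) T) (x,y) = pmf T (x,y)"
proof -
  have i1: "inj (\<lambda>b::nat\<times>nat. (1,0) + b)" by (auto simp: inj_def)
  have i2: "inj (\<lambda>b::nat\<times>nat. (0,1) + b)" by (auto simp: inj_def)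
  show "pmf (map_pmf (\<lambda>b. (1,0) + b) T) (x,y) = (if x > 0 then pmf T (x-1,y) else 0)"
  proof (cases x)
    case 0 thus ?thesis by (intro trans[OF pmf_map_outside]) auto
  next
    case (Suc x') thus ?thesis using pmf_map_inj'[OF i1, of T "(x',y)"] by simp
  qed
  show "pmf (map_pmf (\<lambda>b. (0,1) + b) T) (x,y) = (if y > 0 then pmf T (x,y-1) else 0)"
  proof (cases y)
    case 0 thus ?thesis by (intro trans[OF pmf_map_outside]) auto
  next
    case (Suc y') thus ?thesis using pmf_map_inj'[OF i2, of T "(x,y')"] by simp
  qed
  have "(\<lambda>b::nat\<times>nat. (0,0) + b) = id" by (auto simp: fun_eq_iff zero_prod_def[symmetric])
  thus "pmf (map_pmf (\<lambda>b. (0,0) + b) T) (x,y) = pmf T (x,y)" by simp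
qed

lemma map_add_pair_pmf:
  "map_pmf (\<lambda>(a,b). a + b) (pair_pmf W T) = bind_pmf W (\<lambda>a. map_pmf (\<lambda>b. a + b) T)"
  by (simp add: pair_pmf_def map_bind_pmf map_pmf_def bind_assoc_pmf bind_return_pmf)

lemma S_pmf:
  fixes W :: "(nat \<times> nat) pmf"
  assumes supp: "set_pmf W \<subseteq> {(0,0),(1,0),(0,1)}"
  shows "pmf (map_pmf (\<lambda>\<zeta>. \<Sum>i<n. \<zeta> i) (Pi_pmf {..<n} d (\<lambda>_. W))) (x,y)
     = tri (pmf W (1,0)) (pmf W (0,1)) (pmf W (0,0)) n x y"
proof (induction n arbitrary: x y)
  case 0 thus ?case by (auto simp: tri_def indicator_def zero_prod_def)
next
  case (Suc n)
  define T where "T = map_pmf (\<lambda>\<zeta>. \<Sum>i<n. \<zeta> i) (Pi_pmf {..<n} d (\<lambda>_. W))"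
  have "map_pmf (\<lambda>\<zeta>. \<Sum>i<Suc n. \<zeta> i) (Pi_pmf {..<Suc n} d (\<lambda>_. W))
      = map_pmf (\<lambda>\<zeta>. \<Sum>i<Suc n. \<zeta> i) (map_pmf (\<lambda>(y, f). f(n := y)) (pair_pmf W (Pi_pmf {..<n} d (\<lambda>_. W))))"
    by (simp add: lessThan_Suc Pi_pmf_insert)
  also have "\<dots> = map_pmf (\<lambda>(a,b). a + b) (map_pmf (\<lambda>(y, f). (y, \<Sum>i<n. f i)) (pair_pmf W (Pi_pmf {..<n} d (\<lambda>_. W))))"
    unfolding map_pmf_comp
    by (intro map_pmf_cong refl) (auto simp: add.commute)
  also have "\<dots> = map_pmf (\<lambda>(a,b). a + b) (pair_pmf W T)"
    unfolding T_def pair_map_pmf2 map_pmf_comp by (intro map_pmf_cong refl) auto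
  also have "\<dots> = bind_pmf W (\<lambda>a. map_pmf (\<lambda>b. a + b) T)" by (rule map_add_pair_pmf)
  finally have eq: "map_pmf (\<lambda>\<zeta>. \<Sum>i<Suc n. \<zeta> i) (Pi_pmf {..<Suc n} d (\<lambda>_. W)) = \<dots>" .
  have "pmf (bind_pmf W (\<lambda>a. map_pmf (\<lambda>b. a + b) T)) (x,y)
     = (\<Sum>a\<in>{(0,0),(1,0),(0,1)}. pmf W a *\<^sub>R pmf (map_pmf (\<lambda>b. a + b) T) (x,y))"
    unfolding pmf_bind by (rule integral_measure_pmf) (use supp in auto)
  also have "\<dots> = pmf W (0,0) * pmf T (x,y) + pmf W (1,0) * (if x > 0 then pmf T (x-1,y) else 0)
      + pmf W (0,1) * (if y > 0 then pmf T (x,y-1) else 0)"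
    using pmf_map_add_pair[of T x y] by simp
  also have "\<dots> = tri (pmf W (1,0)) (pmf W (0,1)) (pmf W (0,0)) (Suc n) x y"
    unfolding tri_rec T_def Suc.IH by simp
  finally show ?case using eq by simp
qed

lemma thinning:
  fixes W :: "(nat \<times> nat) pmf"
  assumes supp: "set_pmf W \<subseteq> {(0,0),(1,0),(0,1)}" and mu: "0 < \<mu>"
  shows "bind_pmf (poisson_pmf \<mu>) (\<lambda>n. map_pmf (\<lambda>\<zeta>. \<Sum>i<n. \<zeta> i) (Pi_pmf {..<n} d (\<lambda>_. W)))
     = pair_pmf (poi (\<mu> * pmf W (1,0))) (poi (\<mu> * pmf W (0,1)))"
proof (rule pmf_eqI)
  fix c :: "nat \<times> nat"
  obtain x y where c: "c = (x,y)" by (cases c)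
  have s1: "pmf W (0,0) + pmf W (1,0) + pmf W (0,1) = 1"
    using sum_pmf_eq_1[OF _ supp] by simp
  have "(\<lambda>n. \<mu>^n / fact n * exp (-\<mu>) * tri (pmf W (1,0)) (pmf W (0,1)) (pmf W (0,0)) n x y) sums
           (((\<mu>*pmf W (1,0))^x / fact x * exp (-(\<mu>*pmf W (1,0)))) * ((\<mu>*pmf W (0,1))^y / fact y * exp (-(\<mu>*pmf W (0,1)))))"
    by (rule tri_poisson) (use s1 in simp)
  moreover have "(\<lambda>n. pmf (poisson_pmf \<mu>) n * pmf (map_pmf (\<lambda>\<zeta>. \<Sum>i<n. \<zeta> i) (Pi_pmf {..<n} d (\<lambda>_. W))) (x,y))
     sums pmf (bind_pmf (poisson_pmf \<mu>) (\<lambda>n. map_pmf (\<lambda>\<zeta>. \<Sum>i<n. \<zeta> i) (Pi_pmf {..<n} d (\<lambda>_. W)))) (x,y)"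
    by (rule pmf_bind_nat)
  ultimately show "pmf (bind_pmf (poisson_pmf \<mu>) (\<lambda>n. map_pmf (\<lambda>\<zeta>. \<Sum>i<n. \<zeta> i) (Pi_pmf {..<n} d (\<lambda>_. W)))) c
     = pmf (pair_pmf (poi (\<mu> * pmf W (1,0))) (poi (\<mu> * pmf W (0,1)))) c"
    unfolding c pmf_pair using mu
    by (subst (1 2) pmf_poi) (auto simp: S_pmf[OF supp] dest: sums_unique2)
qed

lemma poi_add:
  assumes a: "0 \<le> a" and b: "0 \<le> b"
  shows "map_pmf (\<lambda>(u,v). u + v) (pair_pmf (poi a) (poi b)) = poi (a + b)"
proof (rule pmf_eqI)
  fix n :: nat
  have pre: "(\<lambda>(u,v). u + v) -` {n} = (\<lambda>i. (i, n - i)) ` {..n}"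
    by (auto simp: image_iff intro!: exI[of _ "fst _"])
  have inj: "inj_on (\<lambda>i. (i, n - i)) {..n}" by (auto simp: inj_on_def)
  have "pmf (map_pmf (\<lambda>(u,v). u + v) (pair_pmf (poi a) (poi b))) n
      = (\<Sum>i\<le>n. pmf (poi a) i * pmf (poi b) (n - i))"
    unfolding pmf_map pre by (subst measure_measure_pmf_finite) (auto simp: sum.reindex[OF inj] pmf_pair)
  also have "\<dots> = (\<Sum>i\<le>n. (n choose i) * a^i * b^(n-i)) / fact n * exp (-(a+b))"
    unfolding sum_divide_distrib sum_distrib_right
  proof (intro sum.cong refl)
    fix i assume i: "i \<in> {..n}"
    hence "real (n choose i) = fact n / (fact i * fact (n - i))" by (simp add: binomial_fact)
    moreover have "exp (- a - b) = exp (-a) * exp (-b)" by (simp add: mult_exp_exp)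
    ultimately show "pmf (poi a) i * pmf (poi b) (n - i) = real (n choose i) * a ^ i * b ^ (n - i) / fact n * exp (- (a + b))"
      using a b by (simp add: pmf_poi field_simps)
  qed
  also have "\<dots> = pmf (poi (a+b)) n"
    using a b by (simp add: pmf_poi binomial_ring)
  finally show "pmf (map_pmf (\<lambda>(u,v). u + v) (pair_pmf (poi a) (poi b))) n = pmf (poi (a+b)) n" .
qed

lemma pair_rearrange:
  fixes P1 :: "'a pmf" and Q1 :: "'b pmf" and P2 :: "'c pmf" and Q2 :: "'d pmf"
  shows
  "map_pmf (\<lambda>((a,b),(c,d)). ((a,c),(b,d))) (pair_pmf (pair_pmf P1 Q1) (pair_pmf P2 Q2))
    = pair_pmf (pair_pmf P1 P2) (pair_pmf Q1 Q2)"
proof (rule pmf_eqI)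
  fix z :: "('a \<times> 'c) \<times> ('b \<times> 'd)"
  obtain a c b d where z: "z = ((a,c),(b,d))" by (cases z) auto
  have inj: "inj (\<lambda>((a,b),(c,d)). ((a,c),(b,d)))"
    by (auto simp: inj_def)
  have "z = (\<lambda>((a,b),(c,d)). ((a,c),(b,d))) ((a,b),(c,d))" by (simp add: z)
  hence "pmf (map_pmf (\<lambda>((a,b),(c,d)). ((a,c),(b,d))) (pair_pmf (pair_pmf P1 Q1) (pair_pmf P2 Q2))) z
      = pmf (pair_pmf (pair_pmf P1 Q1) (pair_pmf P2 Q2)) ((a,b),(c,d))"
    using pmf_map_inj'[OF inj] by metis
  thus "pmf (map_pmf (\<lambda>((a,b),(c,d)). ((a,c),(b,d))) (pair_pmf (pair_pmf P1 Q1) (pair_pmf P2 Q2))) z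
      = pmf (pair_pmf (pair_pmf P1 P2) (pair_pmf Q1 Q2)) z"
    by (simp add: z pmf_pair)
qed

lemma poi_pair_add:
  assumes "0 \<le> a1" "0 \<le> b1" "0 \<le> a2" "0 \<le> b2"
  shows "map_pmf (\<lambda>(u,v). u + v) (pair_pmf (pair_pmf (poi a1) (poi b1)) (pair_pmf (poi a2) (poi b2)))
     = pair_pmf (poi (a1 + a2)) (poi (b1 + b2))"
proof -
  have "map_pmf (\<lambda>(u,v). u + v) (pair_pmf (pair_pmf (poi a1) (poi b1)) (pair_pmf (poi a2) (poi b2)))
     = map_pmf (\<lambda>(x,y). ((\<lambda>(u,v). u + v) x, (\<lambda>(u,v). u + v) y))
         (map_pmf (\<lambda>((a,b),(c,d)). ((a,c),(b,d))) (pair_pmf (pair_pmf (poi a1) (poi b1)) (pair_pmf (poi a2) (poi b2))))"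
    unfolding map_pmf_comp by (intro map_pmf_cong refl) auto
  also have "\<dots> = pair_pmf (poi (a1 + a2)) (poi (b1 + b2))"
    unfolding pair_rearrange map_pair poi_add[OF assms(1,3)] poi_add[OF assms(2,4)] ..
  finally show ?thesis .
qed

lemma aggregate:
  fixes g :: "'i \<Rightarrow> 'c \<Rightarrow> nat \<times> nat"
  assumes "finite S"
    and "\<And>a. a \<in> S \<Longrightarrow> map_pmf (g a) (\<Psi> a) = pair_pmf (poi (la a)) (poi (lb a))"
    and "\<And>a. a \<in> S \<Longrightarrow> 0 \<le> la a \<and> 0 \<le> lb a"
  shows "map_pmf (\<lambda>\<xi>. \<Sum>a\<in>S. g a (\<xi> a)) (Pi_pmf S d \<Psi>) = pair_pmf (poi (\<Sum>a\<in>S. la a)) (poi (\<Sum>a\<in>S. lb a))"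
  using assms
proof (induction S rule: finite_induct)
  case empty
  thus ?case by (simp add: poi_def zero_prod_def)
next
  case (insert a S)
  have "map_pmf (\<lambda>\<xi>. \<Sum>b\<in>insert a S. g b (\<xi> b)) (Pi_pmf (insert a S) d \<Psi>)
     = map_pmf (\<lambda>(u,v). u + v) (map_pmf (\<lambda>(y,f). (g a y, \<Sum>b\<in>S. g b (f b))) (pair_pmf (\<Psi> a) (Pi_pmf S d \<Psi>)))"
    unfolding Pi_pmf_insert[OF insert(1,2)] map_pmf_comp
  proof (intro map_pmf_cong refl)
    fix z assume "z \<in> set_pmf (pair_pmf (\<Psi> a) (Pi_pmf S d \<Psi>))"
    obtain y f where z: "z = (y, f)" by (cases z)
    have "(\<Sum>b\<in>S. g b ((f(a := y)) b)) = (\<Sum>b\<in>S. g b (f b))"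
      using insert(2) by (intro sum.cong) auto
    thus "(case case z of (y, f) \<Rightarrow> f(a := y) of \<xi> \<Rightarrow> \<Sum>b\<in>insert a S. g b (\<xi> b)) =
         (case case z of (y, f) \<Rightarrow> (g a y, \<Sum>b\<in>S. g b (f b)) of (u, v) \<Rightarrow> u + v)"
      using insert(1,2) by (simp add: z)
  qed
  also have "\<dots> = map_pmf (\<lambda>(u,v). u + v) (pair_pmf (pair_pmf (poi (la a)) (poi (lb a)))
       (pair_pmf (poi (\<Sum>a\<in>S. la a)) (poi (\<Sum>a\<in>S. lb a))))"
    unfolding map_pair using insert by simp
  also have "\<dots> = pair_pmf (poi (la a + (\<Sum>a\<in>S. la a))) (poi (lb a + (\<Sum>a\<in>S. lb a)))"
    using insert by (intro poi_pair_add) (auto intro: sum_nonneg)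
  finally show ?case using insert(1,2) by simp
qed


lemma map_diff_pair_pmf:
  "map_pmf (\<lambda>(u,v). f u v) (pair_pmf A B) = bind_pmf A (\<lambda>u. map_pmf (\<lambda>v. f u v) B)"
  by (simp add: pair_pmf_def map_bind_pmf map_pmf_def bind_assoc_pmf bind_return_pmf)

lemma skellam_eq:
  assumes l: "0 \<le> l"
  shows "measure_pmf.prob (pair_pmf (poi l) (poi l)) {(u,v). u = v + j} = exp (-(2*l)) * besselI j (2*l)"
proof -
  define P where "P = poi l"
  define f where "f = (\<lambda>(u::nat,v::nat). int u - int v)"
  have pre: "f -` {int j} = {(u,v). u = v + j}" by (auto simp: f_def)
  have "measure_pmf.prob (pair_pmf P P) {(u,v). u = v + j} = pmf (map_pmf f (pair_pmf P P)) (int j)"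
    unfolding pmf_map pre ..
  also have "map_pmf f (pair_pmf P P) = bind_pmf P (\<lambda>u. map_pmf (\<lambda>v. int u - int v) P)"
    unfolding f_def by (rule map_diff_pair_pmf)
  finally have eq: "measure_pmf.prob (pair_pmf P P) {(u,v). u = v + j} =
      pmf (bind_pmf P (\<lambda>u. map_pmf (\<lambda>v. int u - int v) P)) (int j)" .
  have inner: "pmf (map_pmf (\<lambda>v. int u - int v) P) (int j) = (if j \<le> u then pmf P (u - j) else 0)" for u
  proof (cases "j \<le> u")
    case True
    have inj: "inj (\<lambda>v. int u - int v)" by (auto simp: inj_def)
    have "int j = int u - int (u - j)" using True by simp
    thus ?thesis using True pmf_map_inj'[OF inj, of P "u - j"] by simp
  next
    case False thus ?thesis by (intro trans[OF pmf_map_outside]) auto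
  qed
  have "(\<lambda>u. pmf P u * (if j \<le> u then pmf P (u - j) else 0)) sums
         pmf (bind_pmf P (\<lambda>u. map_pmf (\<lambda>v. int u - int v) P)) (int j)"
    using pmf_bind_nat[of P "\<lambda>u. map_pmf (\<lambda>v. int u - int v) P" "int j"] by (simp add: inner)
  hence "(\<lambda>i. (\<lambda>u. pmf P u * (if j \<le> u then pmf P (u - j) else 0)) (i + j)) sums
         pmf (bind_pmf P (\<lambda>u. map_pmf (\<lambda>v. int u - int v) P)) (int j)"
    by (subst sums_zero_iff_shift) auto
  hence "(\<lambda>v. pmf P (v + j) * pmf P v) sums pmf (bind_pmf P (\<lambda>u. map_pmf (\<lambda>v. int u - int v) P)) (int j)"
    by simp
  moreover have "(\<lambda>v. pmf P (v + j) * pmf P v) = (\<lambda>r. exp (-(2*l)) * ((2*l/2)^(2*r+j) / (fact r * fact (r + j))))"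
  proof
    fix r
    have "exp (-(2*l)) = exp (-l) * exp (-l)" by (simp add: mult_exp_exp)
    moreover have "l^(2*r+j) = l^(r+j) * l^r" proof -
      have "2*r+j = (r+j) + r" by simp
      thus ?thesis by (simp only: power_add)
    qed
    ultimately show "pmf P (r + j) * pmf P r = exp (-(2*l)) * ((2*l/2)^(2*r+j) / (fact r * fact (r + j)))"
      using l by (simp add: P_def pmf_poi add.commute mult_ac)
  qed
  ultimately have "(\<lambda>r. exp (-(2*l)) * ((2*l/2)^(2*r+j) / (fact r * fact (r + j)))) sums
        measure_pmf.prob (pair_pmf P P) {(u,v). u = v + j}" using eq by simp
  hence "(\<lambda>r. exp (2*l) * (exp (-(2*l)) * ((2*l/2)^(2*r+j) / (fact r * fact (r + j))))) sums
        (exp (2*l) * measure_pmf.prob (pair_pmf P P) {(u,v). u = v + j})" by (rule sums_mult)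
  hence "(\<lambda>r. (2*l/2)^(2*r+j) / (fact r * fact (r + j))) sums
        (exp (2*l) * measure_pmf.prob (pair_pmf P P) {(u,v). u = v + j})"
    by (simp add: mult.assoc[symmetric] mult_exp_exp)
  hence "besselI j (2*l) = exp (2*l) * measure_pmf.prob (pair_pmf P P) {(u,v). u = v + j}"
    unfolding besselI_def by (rule sums_unique[symmetric])
  hence "exp (-(2*l)) * besselI j (2*l) = measure_pmf.prob (pair_pmf P P) {(u,v). u = v + j}"
    by (simp add: mult.assoc[symmetric] mult_exp_exp)
  thus ?thesis by (simp add: P_def)
qed

lemma skellam_all:
  assumes l: "0 \<le> l" and m: "m = 2 * l"
  defines "\<Phi> \<equiv> pair_pmf (poi l) (poi l)"
  shows "measure_pmf.prob \<Phi> {(u,v). u = v + j} = exp (- m) * besselI j m"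
    and "measure_pmf.prob \<Phi> {(u,v). u + j = v} = exp (- m) * besselI j m"
    and "measure_pmf.prob \<Phi> {(u,v). u < v} = (1 - exp (- m) * besselI 0 m) / 2"
    and "measure_pmf.prob \<Phi> {(u,v). v < u} = (1 - exp (- m) * besselI 0 m) / 2"
proof -
  have sw: "\<Phi> = map_pmf (\<lambda>(x, y). (y, x)) \<Phi>"
    unfolding \<Phi>_def by (rule pair_commute_pmf)
  have swap: "measure_pmf.prob \<Phi> A = measure_pmf.prob \<Phi> ((\<lambda>(x, y). (y, x)) -` A)" for A
    by (subst sw) (simp add: measure_map_pmf)
  show e1: "measure_pmf.prob \<Phi> {(u,v). u = v + j} = exp (- m) * besselI j m" for j
    unfolding \<Phi>_def m by (rule skellam_eq[OF l])
  have "measure_pmf.prob \<Phi> {(u,v). u + j = v} = measure_pmf.prob \<Phi> {(u,v). u = v + j}"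
    by (subst swap) (auto intro!: arg_cong[where f = "measure_pmf.prob \<Phi>"])
  thus "measure_pmf.prob \<Phi> {(u,v). u + j = v} = exp (- m) * besselI j m" using e1 by simp
  have lg: "measure_pmf.prob \<Phi> {(u,v). u < v} = measure_pmf.prob \<Phi> {(u,v). v < u}"
    by (subst swap) (auto intro!: arg_cong[where f = "measure_pmf.prob \<Phi>"])
  have "measure_pmf.prob \<Phi> ({(u,v). u < v} \<union> {(u,v). v < u} \<union> {(u,v). u = v + 0}) = 1"
    by (subst measure_pmf.prob_eq_1) auto
  also have "measure_pmf.prob \<Phi> ({(u,v). u < v} \<union> {(u,v). v < u} \<union> {(u,v). u = v + 0})
     = measure_pmf.prob \<Phi> {(u,v). u < v} + measure_pmf.prob \<Phi> {(u,v). v < u} + measure_pmf.prob \<Phi> {(u,v). u = v + 0}"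
    by (subst measure_pmf.finite_measure_Union; (subst measure_pmf.finite_measure_Union)?) auto
  finally have "measure_pmf.prob \<Phi> {(u,v). u < v} + measure_pmf.prob \<Phi> {(u,v). v < u} + exp (- m) * besselI 0 m = 1"
    using e1[of 0] by simp
  thus "measure_pmf.prob \<Phi> {(u,v). u < v} = (1 - exp (- m) * besselI 0 m) / 2"
    and "measure_pmf.prob \<Phi> {(u,v). v < u} = (1 - exp (- m) * besselI 0 m) / 2"
    using lg by simp_all
qed


locale inma_setup =
  fixes M :: "'a measure" and q1 q2 :: nat and \<mu> :: real
    and eps :: "int \<times> int \<Rightarrow> 'a \<Rightarrow> nat"
    and Z :: "int \<times> int \<times> nat \<Rightarrow> nat \<times> nat \<Rightarrow> 'a \<Rightarrow> nat"
  assumes P: "prob_space M"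
    and mu_pos: "\<mu> > 0"
    and eps_indep: "prob_space.indep_vars M (\<lambda>_. count_space UNIV) eps UNIV"
    and eps_poisson: "\<And>st. distr M (count_space UNIV) (eps st) = measure_pmf (poisson_pmf \<mu>)"
    and Z_01: "\<And>str ij \<omega>. \<omega> \<in> space M \<Longrightarrow> Z str ij \<omega> \<le> 1"
    and Z_indep: "prob_space.indep_vars M (\<lambda>_. PiM ({..q1} \<times> {..q2}) (\<lambda>_. count_space UNIV))
                    (Zvec q1 q2 Z) (UNIV \<times> UNIV \<times> {1..})"
    and Z_ident: "\<And>s' t' r. r \<ge> 1 \<Longrightarrow>
                    distr M (PiM ({..q1} \<times> {..q2}) (\<lambda>_. count_space UNIV)) (Zvec q1 q2 Z (s', t', r))
                  = distr M (PiM ({..q1} \<times> {..q2}) (\<lambda>_. count_space UNIV)) (Zvec q1 q2 Z (0, 0, 1))"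
    and eps_Z_indep: "prob_space.indep_set M
                    (sets (vimage_algebra (space M) (\<lambda>\<omega> st. eps st \<omega>)
                       (PiM UNIV (\<lambda>_. count_space UNIV))))
                    (sets (vimage_algebra (space M) (\<lambda>\<omega>. \<lambda>str\<in>UNIV \<times> UNIV \<times> {1..}. Zvec q1 q2 Z str \<omega>)
                       (PiM (UNIV \<times> UNIV \<times> {1..}) (\<lambda>_. PiM ({..q1} \<times> {..q2}) (\<lambda>_. count_space UNIV)))))"
begin

sublocale prob_space M by (rule P)

abbreviation "Ix \<equiv> {..q1} \<times> {..q2}"
abbreviation "VS \<equiv> PiM Ix (\<lambda>_. count_space (UNIV::nat set))"
abbreviation "Zv \<equiv> Zvec q1 q2 Z"
definition "Vec01 = PiE Ix (\<lambda>_. {0, 1::nat})"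

lemma finite_Vec01: "finite Vec01"
  unfolding Vec01_def by (intro finite_PiE) auto

lemma eps_meas: "eps a \<in> M \<rightarrow>\<^sub>M count_space UNIV"
  using eps_indep unfolding indep_vars_def2 by (cases a) auto

lemma Zv_meas: "j \<in> UNIV \<times> UNIV \<times> {1..} \<Longrightarrow> Zv j \<in> M \<rightarrow>\<^sub>M VS"
  using Z_indep unfolding indep_vars_def2 by auto

lemma Zv_Vec01: assumes "\<omega> \<in> space M" shows "Zv j \<omega> \<in> Vec01"
proof -
  have "Z j ij \<omega> \<in> {0,1}" for ij
  proof -
    have "Z j ij \<omega> \<le> 1" by (rule Z_01[OF assms])
    hence "Z j ij \<omega> = 0 \<or> Z j ij \<omega> = 1" by arith
    thus ?thesis by simp
  qed
  thus ?thesis unfolding Vec01_def Zvec_def restrict_PiE_iff by simp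
qed

lemma Zv_space: "Zv j \<omega> \<in> space VS"
  unfolding Zvec_def space_PiM by auto

lemma sing_sets: "{z} \<inter> space VS \<in> sets VS"
proof (cases "z \<in> space VS")
  case True
  have "{z} \<inter> space VS = {f \<in> space VS. \<forall>i\<in>Ix. f i = z i}"
  proof (intro set_eqI iffI)
    fix f assume "f \<in> {f \<in> space VS. \<forall>i\<in>Ix. f i = z i}"
    hence "f \<in> space VS" "\<forall>i\<in>Ix. f i = z i" by auto
    hence "f = z" using True unfolding space_PiM by (intro PiE_ext) auto
    thus "f \<in> {z} \<inter> space VS" using True by simp
  qed auto
  also have "\<dots> \<in> sets VS"
  proof (rule sets.sets_Collect_finite_All)
    fix i assume i: "i \<in> Ix"
    have "(\<lambda>f. f i) -` {z i} \<inter> space VS \<in> sets VS"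
      by (rule measurable_sets[OF measurable_component_singleton[OF i]]) auto
    moreover have "(\<lambda>f. f i) -` {z i} \<inter> space VS = {f \<in> space VS. f i = z i}" by auto
    ultimately show "{f \<in> space VS. f i = z i} \<in> sets VS" by simp
  qed auto
  finally show ?thesis .
next
  case False thus ?thesis by simp
qed

lemma Zeq_eq: "{\<omega> \<in> space M. Zv j \<omega> = z} = Zv j -` ({z} \<inter> space VS) \<inter> space M"
  using Zv_space[of j] by blast

lemma Zeq_sets: "j \<in> UNIV \<times> UNIV \<times> {1..} \<Longrightarrow> {\<omega> \<in> space M. Zv j \<omega> = z} \<in> sets M"
  unfolding Zeq_eq by (rule measurable_sets[OF Zv_meas sing_sets])

lemma prob_Zeq: assumes "j \<in> UNIV \<times> UNIV \<times> {1..}"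
  shows "prob {\<omega> \<in> space M. Zv j \<omega> = z} = prob {\<omega> \<in> space M. Zv (0,0,1) \<omega> = z}"
proof -
  obtain s' t' r where j: "j = (s', t', r)" and r: "r \<ge> 1" using assms by auto
  have "prob {\<omega> \<in> space M. Zv j \<omega> = z} = measure (distr M VS (Zv j)) ({z} \<inter> space VS)"
    unfolding Zeq_eq by (rule measure_distr[symmetric, OF Zv_meas[OF assms] sing_sets])
  also have "\<dots> = measure (distr M VS (Zv (0,0,1))) ({z} \<inter> space VS)"
    unfolding j using Z_ident[OF r] by simp
  also have "\<dots> = prob {\<omega> \<in> space M. Zv (0,0,1) \<omega> = z}"
    unfolding Zeq_eq by (rule measure_distr[OF Zv_meas sing_sets]) auto
  finally show ?thesis .
qed

lemma eps_eq_sets: "{\<omega> \<in> space M. eps a \<omega> = n} \<in> sets M"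
proof -
  have "eps a -` {n} \<inter> space M \<in> sets M" by (rule measurable_sets[OF eps_meas]) auto
  moreover have "eps a -` {n} \<inter> space M = {\<omega> \<in> space M. eps a \<omega> = n}" by auto
  ultimately show ?thesis by simp
qed

lemma prob_eps_eq: "prob {\<omega> \<in> space M. eps a \<omega> = n} = pmf (poisson_pmf \<mu>) n"
proof -
  have "prob (eps a -` {n} \<inter> space M) = measure (distr M (count_space UNIV) (eps a)) {n}"
    by (rule measure_distr[symmetric, OF eps_meas]) auto
  also have "\<dots> = pmf (poisson_pmf \<mu>) n" unfolding eps_poisson by (simp add: measure_pmf_single)
  finally show ?thesis by (simp add: vimage_def Int_def conj_commute)
qed

definition nu :: "(nat \<times> nat \<Rightarrow> nat) pmf" where
  "nu = embed_pmf (\<lambda>z. prob {\<omega> \<in> space M. Zv (0,0,1) \<omega> = z})"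

lemma Zeq_empty: "z \<notin> Vec01 \<Longrightarrow> {\<omega> \<in> space M. Zv j \<omega> = z} = {}"
  using Zv_Vec01[of _ j] by blast

lemma Zin_Union: "{\<omega> \<in> space M. Zv j \<omega> \<in> A} = (\<Union>z\<in>A \<inter> Vec01. {\<omega> \<in> space M. Zv j \<omega> = z})"
  using Zv_Vec01[of _ j] by blast

lemma prob_Zin: assumes "j \<in> UNIV \<times> UNIV \<times> {1..}"
  shows "prob {\<omega> \<in> space M. Zv j \<omega> \<in> A} = (\<Sum>z\<in>A \<inter> Vec01. prob {\<omega> \<in> space M. Zv j \<omega> = z})"
  unfolding Zin_Union
  by (rule finite_measure_finite_Union) (use finite_Vec01 Zeq_sets[OF assms] in \<open>auto simp: disjoint_family_on_def\<close>)

lemma pmf_nu: "pmf nu z = prob {\<omega> \<in> space M. Zv (0,0,1) \<omega> = z}"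
  unfolding nu_def
proof (rule pmf_embed_pmf)
  have "(\<integral>\<^sup>+ z. ennreal (prob {\<omega> \<in> space M. Zv (0,0,1) \<omega> = z}) \<partial>count_space UNIV)
      = (\<Sum>z\<in>Vec01. ennreal (prob {\<omega> \<in> space M. Zv (0,0,1) \<omega> = z}))"
    by (rule nn_integral_count_space'[OF finite_Vec01]) (auto simp: Zeq_empty)
  also have "\<dots> = ennreal (\<Sum>z\<in>UNIV \<inter> Vec01. prob {\<omega> \<in> space M. Zv (0,0,1) \<omega> = z})"
    by (simp add: sum_ennreal)
  also have "\<dots> = ennreal (prob {\<omega> \<in> space M. Zv (0,0,1) \<omega> \<in> UNIV})"
    by (subst prob_Zin) auto
  also have "\<dots> = 1" by (simp add: prob_space)
  finally show "(\<integral>\<^sup>+ z. ennreal (prob {\<omega> \<in> space M. Zv (0,0,1) \<omega> = z}) \<partial>count_space UNIV) = 1" .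
qed auto

lemma set_pmf_nu: "set_pmf nu \<subseteq> Vec01"
proof
  fix z assume "z \<in> set_pmf nu"
  hence "pmf nu z \<noteq> 0" by (simp add: pmf_eq_0_set_pmf)
  show "z \<in> Vec01"
  proof (rule ccontr)
    assume "z \<notin> Vec01"
    hence "pmf nu z = 0" unfolding pmf_nu Zeq_empty[OF \<open>z \<notin> Vec01\<close>] by simp
    thus False using \<open>pmf nu z \<noteq> 0\<close> by simp
  qed
qed

lemma prob_nu: "measure_pmf.prob nu A = prob {\<omega> \<in> space M. Zv (0,0,1) \<omega> \<in> A}"
proof -
  have "measure_pmf.prob nu A = measure_pmf.prob nu (A \<inter> Vec01)"
    using set_pmf_nu by (metis inf.absorb_iff2 measure_Int_set_pmf inf_assoc)
  also have "\<dots> = (\<Sum>z\<in>A \<inter> Vec01. pmf nu z)"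
    using finite_Vec01 by (simp add: measure_measure_pmf_finite)
  also have "\<dots> = prob {\<omega> \<in> space M. Zv (0,0,1) \<omega> \<in> A}"
    by (subst prob_Zin) (auto simp: pmf_nu)
  finally show ?thesis .
qed

lemma M1:
  assumes fin: "finite Pos" and ne: "Pos \<noteq> {}"
  shows "prob {\<omega> \<in> space M. \<forall>a\<in>Pos. eps a \<omega> = n a \<and> (\<forall>r<n a. Zv (fst a, snd a, Suc r) \<omega> = \<zeta> a r)}
        = (\<Prod>a\<in>Pos. pmf (poisson_pmf \<mu>) (n a) * (\<Prod>r<n a. pmf nu (\<zeta> a r)))"
proof -
  define JJ :: "(int \<times> int \<times> nat) set" where "JJ = UNIV \<times> UNIV \<times> {1..}"
  define E1 where "E1 = {\<omega> \<in> space M. \<forall>a\<in>Pos. eps a \<omega> = n a}"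
  define SJ where "SJ = (SIGMA a:Pos. {..<n a})"
  define jf where "jf = (\<lambda>(a::int\<times>int, r::nat). (fst a, snd a, Suc r))"
  define J where "J = jf ` SJ"
  define zz where "zz = (\<lambda>(x::int, y::int, r::nat). \<zeta> (x,y) (r - 1))"
  define E2 where "E2 = {\<omega> \<in> space M. \<forall>j\<in>J. Zv j \<omega> = zz j}"
  have JJ: "J \<subseteq> JJ" by (auto simp: J_def JJ_def jf_def)
  have finSJ: "finite SJ" unfolding SJ_def using fin by auto
  have injjf: "inj_on jf SJ" by (auto simp: inj_on_def jf_def)
  have ev: "{\<omega> \<in> space M. \<forall>a\<in>Pos. eps a \<omega> = n a \<and> (\<forall>r<n a. Zv (fst a, snd a, Suc r) \<omega> = \<zeta> a r)} = E1 \<inter> E2"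
  proof -
    have q: "(\<forall>j\<in>J. Pr j) \<longleftrightarrow> (\<forall>a\<in>Pos. \<forall>r<n a. Pr (fst a, snd a, Suc r))" for Pr
      unfolding J_def SJ_def jf_def by force
    have zz: "zz (fst a, snd a, Suc r) = \<zeta> a r" for a r by (simp add: zz_def)
    show ?thesis unfolding E1_def E2_def q zz by blast
  qed
  have E1v: "E1 \<in> sets (vimage_algebra (space M) (\<lambda>\<omega> st. eps st \<omega>) (PiM UNIV (\<lambda>_. count_space UNIV)))"
  proof -
    let ?PM = "PiM UNIV (\<lambda>_::int\<times>int. count_space (UNIV::nat set))"
    have "{f \<in> space ?PM. \<forall>a\<in>Pos. f a = n a} \<in> sets ?PM"
    proof (rule sets.sets_Collect_finite_All[OF _ fin])
      fix a :: "int \<times> int"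
      have "(\<lambda>f. f a) -` {n a} \<inter> space ?PM \<in> sets ?PM"
        by (rule measurable_sets[OF measurable_component_singleton]) auto
      moreover have "(\<lambda>f. f a) -` {n a} \<inter> space ?PM = {f \<in> space ?PM. f a = n a}" by auto
      ultimately show "{f \<in> space ?PM. f a = n a} \<in> sets ?PM" by simp
    qed
    from in_vimage_algebra[OF this, of "\<lambda>\<omega> st. eps st \<omega>" "space M"]
    show ?thesis unfolding E1_def by (simp add: space_PiM vimage_def Int_def conj_commute)
  qed
  have E2v: "E2 \<in> sets (vimage_algebra (space M) (\<lambda>\<omega>. \<lambda>str\<in>UNIV \<times> UNIV \<times> {1..}. Zvec q1 q2 Z str \<omega>)
                       (PiM (UNIV \<times> UNIV \<times> {1..}) (\<lambda>_. VS)))"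
  proof -
    let ?PM = "PiM JJ (\<lambda>_. VS)"
    have "{g \<in> space ?PM. \<forall>j\<in>J. g j = zz j} \<in> sets ?PM"
    proof (rule sets.sets_Collect_finite_All)
      fix j assume j: "j \<in> J"
      hence jJJ: "j \<in> JJ" using JJ by auto
      have "(\<lambda>g. g j) -` ({zz j} \<inter> space VS) \<inter> space ?PM \<in> sets ?PM"
        by (rule measurable_sets[OF measurable_component_singleton[OF jJJ] sing_sets])
      moreover have "(\<lambda>g. g j) -` ({zz j} \<inter> space VS) \<inter> space ?PM = {g \<in> space ?PM. g j = zz j}"
        using jJJ by (auto simp: space_PiM)
      ultimately show "{g \<in> space ?PM. g j = zz j} \<in> sets ?PM" by simp
    next
      show "finite J" unfolding J_def using finSJ by simp
    qed
    from in_vimage_algebra[OF this, of "\<lambda>\<omega>. \<lambda>str\<in>JJ. Zvec q1 q2 Z str \<omega>" "space M"]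
    have "(\<lambda>\<omega>. \<lambda>str\<in>JJ. Zv str \<omega>) -` {g \<in> space ?PM. \<forall>j\<in>J. g j = zz j} \<inter> space M
        \<in> sets (vimage_algebra (space M) (\<lambda>\<omega>. \<lambda>str\<in>JJ. Zv str \<omega>) ?PM)" .
    moreover have "(\<lambda>\<omega>. \<lambda>str\<in>JJ. Zv str \<omega>) -` {g \<in> space ?PM. \<forall>j\<in>J. g j = zz j} \<inter> space M = E2"
      using JJ Zv_space unfolding E2_def by (auto simp: space_PiM)
    ultimately show ?thesis unfolding JJ_def by simp
  qed
  have "prob (E1 \<inter> E2) = prob E1 * prob E2"
    by (rule indep_setD[OF eps_Z_indep E1v E2v])
  moreover have "prob E1 = (\<Prod>a\<in>Pos. pmf (poisson_pmf \<mu>) (n a))"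
  proof -
    have "E1 = (\<Inter>a\<in>Pos. eps a -` {n a} \<inter> space M)" using ne unfolding E1_def by auto
    moreover have ind: "indep_sets (\<lambda>i. {eps i -` A \<inter> space M |A. A \<in> sets (count_space UNIV)}) UNIV"
      using eps_indep unfolding indep_vars_def2 by (rule conjunct2)
    have mem: "\<forall>a\<in>Pos. eps a -` {n a} \<inter> space M \<in> {eps a -` A \<inter> space M |A. A \<in> sets (count_space UNIV)}"
      by auto
    have "prob (\<Inter>a\<in>Pos. eps a -` {n a} \<inter> space M) = (\<Prod>a\<in>Pos. prob (eps a -` {n a} \<inter> space M))"
      by (rule indep_setsD[OF ind _ ne fin mem]) simp
    ultimately have "prob E1 = (\<Prod>a\<in>Pos. prob (eps a -` {n a} \<inter> space M))" by simp
    also have "\<dots> = (\<Prod>a\<in>Pos. pmf (poisson_pmf \<mu>) (n a))"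
      using prob_eps_eq by (simp add: vimage_def Int_def conj_commute)
    finally show ?thesis .
  qed
  moreover have "prob E2 = (\<Prod>j\<in>J. pmf nu (zz j))"
  proof (cases "J = {}")
    case True thus ?thesis by (simp add: E2_def prob_space)
  next
    case False
    have "E2 = (\<Inter>j\<in>J. Zv j -` ({zz j} \<inter> space VS) \<inter> space M)"
      using False Zv_space unfolding E2_def by auto
    moreover have ind: "indep_sets (\<lambda>i. {Zv i -` A \<inter> space M |A. A \<in> sets VS}) JJ"
      using Z_indep unfolding indep_vars_def2 JJ_def by (rule conjunct2)
    have "prob (\<Inter>j\<in>J. Zv j -` ({zz j} \<inter> space VS) \<inter> space M) = (\<Prod>j\<in>J. prob (Zv j -` ({zz j} \<inter> space VS) \<inter> space M))"
    proof (rule indep_setsD[OF ind JJ False])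
      show "finite J" unfolding J_def using finSJ by simp
      show "\<forall>j\<in>J. Zv j -` ({zz j} \<inter> space VS) \<inter> space M \<in> {Zv j -` A \<inter> space M |A. A \<in> sets VS}"
        using sing_sets by blast
    qed
    ultimately have "prob E2 = (\<Prod>j\<in>J. prob (Zv j -` ({zz j} \<inter> space VS) \<inter> space M))" by simp
    also have "\<dots> = (\<Prod>j\<in>J. pmf nu (zz j))"
    proof (intro prod.cong refl)
      fix j assume "j \<in> J"
      hence "j \<in> UNIV \<times> UNIV \<times> {1..}" using JJ unfolding JJ_def by auto
      thus "prob (Zv j -` ({zz j} \<inter> space VS) \<inter> space M) = pmf nu (zz j)"
        unfolding Zeq_eq[symmetric] pmf_nu by (rule prob_Zeq)
    qed
    finally show ?thesis .
  qed
  moreover have "(\<Prod>j\<in>J. pmf nu (zz j)) = (\<Prod>a\<in>Pos. \<Prod>r<n a. pmf nu (\<zeta> a r))"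
  proof -
    have "(\<Prod>j\<in>J. pmf nu (zz j)) = (\<Prod>x\<in>SJ. pmf nu (zz (jf x)))"
      unfolding J_def by (rule prod.reindex[OF injjf, unfolded comp_def])
    also have "\<dots> = (\<Prod>x\<in>SJ. pmf nu (\<zeta> (fst x) (snd x)))"
      by (intro prod.cong refl) (auto simp: zz_def jf_def)
    also have "\<dots> = (\<Prod>a\<in>Pos. \<Prod>r<n a. pmf nu (\<zeta> a r))"
      unfolding SJ_def using fin by (subst prod.Sigma) (auto simp: split_def)
    finally show ?thesis .
  qed
  ultimately show ?thesis unfolding ev by (simp add: prod.distrib)
qed

end


context inma_setup
begin

definition Xi :: "(int \<times> int) set \<Rightarrow> 'a \<Rightarrow> (int \<times> int \<Rightarrow> nat \<times> (nat \<Rightarrow> nat \<times> nat \<Rightarrow> nat))" where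
  "Xi Pos \<omega> = (\<lambda>a\<in>Pos. (eps a \<omega>, \<lambda>r\<in>{..<eps a \<omega>}. Zv (fst a, snd a, Suc r) \<omega>))"

definition Psi1 :: "(nat \<times> (nat \<Rightarrow> nat \<times> nat \<Rightarrow> nat)) pmf" where
  "Psi1 = bind_pmf (poisson_pmf \<mu>) (\<lambda>n. map_pmf (Pair n) (Pi_pmf {..<n} undefined (\<lambda>_. nu)))"

definition Psi :: "(int \<times> int) set \<Rightarrow> (int \<times> int \<Rightarrow> nat \<times> (nat \<Rightarrow> nat \<times> nat \<Rightarrow> nat)) pmf" where
  "Psi Pos = Pi_pmf Pos undefined (\<lambda>_. Psi1)"

definition shaped :: "(int \<times> int) set \<Rightarrow> (int \<times> int \<Rightarrow> nat \<times> (nat \<Rightarrow> nat \<times> nat \<Rightarrow> nat)) \<Rightarrow> bool" where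
  "shaped Pos \<xi> \<longleftrightarrow> (\<forall>a. a \<notin> Pos \<longrightarrow> \<xi> a = undefined) \<and> (\<forall>a\<in>Pos. \<forall>r. fst (\<xi> a) \<le> r \<longrightarrow> snd (\<xi> a) r = undefined)"

lemma pmf_Psi1: "pmf Psi1 (n, \<zeta>) = pmf (poisson_pmf \<mu>) n * pmf (Pi_pmf {..<n} undefined (\<lambda>_. nu)) \<zeta>"
proof -
  have "(\<lambda>n'. pmf (poisson_pmf \<mu>) n' * pmf (map_pmf (Pair n') (Pi_pmf {..<n'} undefined (\<lambda>_. nu))) (n, \<zeta>))
      sums pmf Psi1 (n, \<zeta>)" unfolding Psi1_def by (rule pmf_bind_nat)
  moreover have "(\<lambda>n'. pmf (poisson_pmf \<mu>) n' * pmf (map_pmf (Pair n') (Pi_pmf {..<n'} undefined (\<lambda>_. nu))) (n, \<zeta>))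
     = (\<lambda>n'. if n' = n then pmf (poisson_pmf \<mu>) n * pmf (Pi_pmf {..<n} undefined (\<lambda>_. nu)) \<zeta> else 0)"
  proof
    fix n'
    show "pmf (poisson_pmf \<mu>) n' * pmf (map_pmf (Pair n') (Pi_pmf {..<n'} undefined (\<lambda>_. nu))) (n, \<zeta>)
     = (if n' = n then pmf (poisson_pmf \<mu>) n * pmf (Pi_pmf {..<n} undefined (\<lambda>_. nu)) \<zeta> else 0)"
    proof (cases "n' = n")
      case True
      have "inj (Pair n)" by (auto simp: inj_def)
      from pmf_map_inj'[OF this, of "Pi_pmf {..<n} undefined (\<lambda>_. nu)" \<zeta>]
      show ?thesis using True by simp
    next
      case False
      hence "pmf (map_pmf (Pair n') (Pi_pmf {..<n'} undefined (\<lambda>_. nu))) (n, \<zeta>) = 0"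
        by (intro pmf_map_outside) auto
      thus ?thesis using False by simp
    qed
  qed
  ultimately show ?thesis using sums_single[of n "\<lambda>_. pmf (poisson_pmf \<mu>) n * pmf (Pi_pmf {..<n} undefined (\<lambda>_. nu)) \<zeta>"]
    by (simp add: sums_unique2)
qed

lemma Xi_shaped: "shaped Pos (Xi Pos \<omega>)"
  unfolding shaped_def Xi_def by auto

lemma pmf_Psi_nonshaped:
  assumes fin: "finite Pos" and ns: "\<not> shaped Pos \<xi>"
  shows "pmf (Psi Pos) \<xi> = 0"
proof (cases "\<forall>a. a \<notin> Pos \<longrightarrow> \<xi> a = undefined")
  case False thus ?thesis unfolding Psi_def by (intro pmf_Pi_outside[OF fin]) blast
next
  case True
  then obtain a r where a: "a \<in> Pos" "fst (\<xi> a) \<le> r" "snd (\<xi> a) r \<noteq> undefined"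
    using ns unfolding shaped_def by auto
  obtain n \<zeta> where xa: "\<xi> a = (n, \<zeta>)" by (cases "\<xi> a")
  have "pmf (Pi_pmf {..<n} undefined (\<lambda>_. nu)) \<zeta> = 0"
    by (rule pmf_Pi_outside) (use a xa in \<open>auto simp: not_less intro!: exI[of _ r]\<close>)
  hence "pmf Psi1 (\<xi> a) = 0" unfolding xa by (simp add: pmf_Psi1)
  hence "(\<Prod>b\<in>Pos. pmf Psi1 (\<xi> b)) = 0" using a(1) fin by (metis prod_zero_iff)
  thus ?thesis unfolding Psi_def using True by (simp add: pmf_Pi[OF fin])
qed

lemma pmf_Psi_shaped:
  assumes fin: "finite Pos" and sh: "shaped Pos \<xi>"
  shows "pmf (Psi Pos) \<xi> = (\<Prod>a\<in>Pos. pmf (poisson_pmf \<mu>) (fst (\<xi> a)) * (\<Prod>r<fst (\<xi> a). pmf nu (snd (\<xi> a) r)))"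
proof -
  have "pmf (Psi Pos) \<xi> = (\<Prod>a\<in>Pos. pmf Psi1 (\<xi> a))"
    unfolding Psi_def using sh by (simp add: pmf_Pi[OF fin] shaped_def)
  also have "\<dots> = (\<Prod>a\<in>Pos. pmf (poisson_pmf \<mu>) (fst (\<xi> a)) * (\<Prod>r<fst (\<xi> a). pmf nu (snd (\<xi> a) r)))"
  proof (intro prod.cong refl)
    fix a assume a: "a \<in> Pos"
    obtain n \<zeta> where xa: "\<xi> a = (n, \<zeta>)" by (cases "\<xi> a")
    have "\<forall>r. r \<notin> {..<n} \<longrightarrow> \<zeta> r = undefined" using sh a xa unfolding shaped_def by force
    thus "pmf Psi1 (\<xi> a) = pmf (poisson_pmf \<mu>) (fst (\<xi> a)) * (\<Prod>r<fst (\<xi> a). pmf nu (snd (\<xi> a) r))"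
      unfolding xa by (simp add: pmf_Psi1 pmf_Pi)
  qed
  finally show ?thesis .
qed

lemma Xi_eq_set:
  assumes sh: "shaped Pos \<xi>"
  shows "{\<omega> \<in> space M. Xi Pos \<omega> = \<xi>} = {\<omega> \<in> space M. \<forall>a\<in>Pos. eps a \<omega> = fst (\<xi> a) \<and>
            (\<forall>r<fst (\<xi> a). Zv (fst a, snd a, Suc r) \<omega> = snd (\<xi> a) r)}"
proof (intro set_eqI iffI)
  fix \<omega> assume "\<omega> \<in> {\<omega> \<in> space M. Xi Pos \<omega> = \<xi>}"
  hence \<omega>: "\<omega> \<in> space M" "Xi Pos \<omega> = \<xi>" by auto
  have "eps a \<omega> = fst (\<xi> a) \<and> (\<forall>r<fst (\<xi> a). Zv (fst a, snd a, Suc r) \<omega> = snd (\<xi> a) r)" if a: "a \<in> Pos" for a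
  proof -
    have "\<xi> a = (eps a \<omega>, \<lambda>r\<in>{..<eps a \<omega>}. Zv (fst a, snd a, Suc r) \<omega>)"
      using \<omega>(2)[symmetric] a unfolding Xi_def by simp
    thus ?thesis by auto
  qed
  thus "\<omega> \<in> {\<omega> \<in> space M. \<forall>a\<in>Pos. eps a \<omega> = fst (\<xi> a) \<and>
            (\<forall>r<fst (\<xi> a). Zv (fst a, snd a, Suc r) \<omega> = snd (\<xi> a) r)}" using \<omega> by auto
next
  fix \<omega> assume "\<omega> \<in> {\<omega> \<in> space M. \<forall>a\<in>Pos. eps a \<omega> = fst (\<xi> a) \<and>
            (\<forall>r<fst (\<xi> a). Zv (fst a, snd a, Suc r) \<omega> = snd (\<xi> a) r)}"
  hence \<omega>: "\<omega> \<in> space M" and h: "\<And>a. a \<in> Pos \<Longrightarrow> eps a \<omega> = fst (\<xi> a) \<and>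
            (\<forall>r<fst (\<xi> a). Zv (fst a, snd a, Suc r) \<omega> = snd (\<xi> a) r)" by auto
  have "Xi Pos \<omega> a = \<xi> a" for a
  proof (cases "a \<in> Pos")
    case False
    hence "\<xi> a = undefined" using sh unfolding shaped_def by blast
    thus ?thesis unfolding Xi_def using False by simp
  next
    case True
    obtain n \<zeta> where xa: "\<xi> a = (n, \<zeta>)" by (cases "\<xi> a")
    have "(\<lambda>r\<in>{..<n}. Zv (fst a, snd a, Suc r) \<omega>) = \<zeta>"
    proof
      fix r show "(\<lambda>r\<in>{..<n}. Zv (fst a, snd a, Suc r) \<omega>) r = \<zeta> r"
        using h[OF True] sh True xa unfolding shaped_def by (cases "r < n") auto
    qed
    thus ?thesis using h[OF True] True xa unfolding Xi_def by simp
  qed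
  thus "\<omega> \<in> {\<omega> \<in> space M. Xi Pos \<omega> = \<xi>}" using \<omega> by auto
qed

lemma Xi_eq_empty: "\<not> shaped Pos \<xi> \<Longrightarrow> {\<omega> \<in> space M. Xi Pos \<omega> = \<xi>} = {}"
  using Xi_shaped by auto

lemma point_sets: assumes fin: "finite Pos" shows "{\<omega> \<in> space M. Xi Pos \<omega> = \<xi>} \<in> sets M"
proof (cases "shaped Pos \<xi>")
  case False thus ?thesis by (simp add: Xi_eq_empty)
next
  case True
  have "{\<omega> \<in> space M. eps a \<omega> = fst (\<xi> a) \<and> (\<forall>r<fst (\<xi> a). Zv (fst a, snd a, Suc r) \<omega> = snd (\<xi> a) r)} \<in> sets M" for a
  proof (rule sets.sets_Collect_conj)
    show "{\<omega> \<in> space M. eps a \<omega> = fst (\<xi> a)} \<in> sets M" by (rule eps_eq_sets)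
    have "{\<omega> \<in> space M. \<forall>r\<in>{..<fst (\<xi> a)}. Zv (fst a, snd a, Suc r) \<omega> = snd (\<xi> a) r} \<in> sets M"
      by (rule sets.sets_Collect_finite_All) (rule Zeq_sets, simp, simp)
    thus "{\<omega> \<in> space M. \<forall>r<fst (\<xi> a). Zv (fst a, snd a, Suc r) \<omega> = snd (\<xi> a) r} \<in> sets M"
      by (simp only: lessThan_iff Ball_def)
  qed
  hence "{\<omega> \<in> space M. \<forall>a\<in>Pos. eps a \<omega> = fst (\<xi> a) \<and> (\<forall>r<fst (\<xi> a). Zv (fst a, snd a, Suc r) \<omega> = snd (\<xi> a) r)} \<in> sets M"
    by (rule sets.sets_Collect_finite_All[OF _ fin])
  thus ?thesis unfolding Xi_eq_set[OF True] .
qed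

lemma point_mass:
  assumes fin: "finite Pos" and ne: "Pos \<noteq> {}"
  shows "prob {\<omega> \<in> space M. Xi Pos \<omega> = \<xi>} = pmf (Psi Pos) \<xi>"
proof (cases "shaped Pos \<xi>")
  case False thus ?thesis by (simp add: Xi_eq_empty pmf_Psi_nonshaped[OF fin])
next
  case True
  show ?thesis unfolding Xi_eq_set[OF True] pmf_Psi_shaped[OF fin True] by (rule M1[OF fin ne])
qed

lemma Xi_dist:
  assumes fin: "finite Pos" and ne: "Pos \<noteq> {}"
  shows "prob {\<omega> \<in> space M. Xi Pos \<omega> \<in> E} = measure_pmf.prob (Psi Pos) E"
proof -
  define C where "C = PiE Pos (\<lambda>_. SIGMA n:(UNIV::nat set). PiE {..<n} (\<lambda>_. Vec01))"
  have cC: "countable C" unfolding C_def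
  proof (rule countable_PiE[OF fin])
    fix a
    show "countable (SIGMA n:(UNIV::nat set). PiE {..<n} (\<lambda>_. Vec01))"
    proof (rule countable_SIGMA)
      fix n :: nat
      show "countable (PiE {..<n} (\<lambda>_. Vec01))"
        by (rule countable_finite, rule finite_PiE) (use finite_Vec01 in auto)
    qed simp
  qed
  have XC: "Xi Pos \<omega> \<in> C" if "\<omega> \<in> space M" for \<omega>
    unfolding C_def Xi_def using Zv_Vec01[OF that] by auto
  have key: "emeasure M {\<omega> \<in> space M. Xi Pos \<omega> \<in> E} = emeasure (measure_pmf (Psi Pos)) (E \<inter> C)" for E
  proof -
    have cEC: "countable (E \<inter> C)" by (rule countable_subset[OF _ cC]) auto
    have "{\<omega> \<in> space M. Xi Pos \<omega> \<in> E} = (\<Union>\<xi>\<in>E \<inter> C. {\<omega> \<in> space M. Xi Pos \<omega> = \<xi>})"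
      using XC by auto
    have "emeasure M {\<omega> \<in> space M. Xi Pos \<omega> \<in> E}
        = (\<integral>\<^sup>+ \<xi>. emeasure M {\<omega> \<in> space M. Xi Pos \<omega> = \<xi>} \<partial>count_space (E \<inter> C))"
    proof -
      have dj: "disjoint_family_on (\<lambda>\<xi>. {\<omega> \<in> space M. Xi Pos \<omega> = \<xi>}) (E \<inter> C)"
        by (auto simp: disjoint_family_on_def)
      show ?thesis unfolding \<open>{\<omega> \<in> space M. Xi Pos \<omega> \<in> E} = _\<close>
        by (rule emeasure_UN_countable[OF point_sets[OF fin] cEC dj])
    qed
    also have "\<dots> = (\<integral>\<^sup>+ \<xi>. emeasure (measure_pmf (Psi Pos)) {\<xi>} \<partial>count_space (E \<inter> C))"
      by (intro nn_integral_cong) (simp add: emeasure_eq_measure point_mass[OF fin ne] emeasure_pmf_single)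
    also have "\<dots> = emeasure (measure_pmf (Psi Pos)) (\<Union>\<xi>\<in>E \<inter> C. {\<xi>})"
      by (rule emeasure_UN_countable[symmetric]) (auto simp: disjoint_family_on_def cEC)
    also have "(\<Union>\<xi>\<in>E \<inter> C. {\<xi>}) = E \<inter> C" by auto
    finally show ?thesis .
  qed
  have "emeasure (measure_pmf (Psi Pos)) C = 1"
    using key[of UNIV] by (simp add: emeasure_space_1)
  hence "measure_pmf.prob (Psi Pos) C = 1" by (simp add: measure_pmf.emeasure_eq_measure)
  moreover have "measure_pmf.prob (Psi Pos) (UNIV - C) = 1 - measure_pmf.prob (Psi Pos) C"
    using measure_pmf.prob_compl[of C "Psi Pos"] by simp
  ultimately have comp: "measure_pmf.prob (Psi Pos) (- C) = 0" by (simp add: Compl_eq_Diff_UNIV)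
  have "measure_pmf.prob (Psi Pos) E \<le> measure_pmf.prob (Psi Pos) ((E \<inter> C) \<union> (- C))"
    by (rule measure_pmf.finite_measure_mono) auto
  also have "\<dots> = measure_pmf.prob (Psi Pos) (E \<inter> C) + measure_pmf.prob (Psi Pos) (- C)"
    by (rule measure_pmf.finite_measure_Union) auto
  finally have le: "measure_pmf.prob (Psi Pos) E \<le> measure_pmf.prob (Psi Pos) (E \<inter> C)" using comp by simp
  have ge: "measure_pmf.prob (Psi Pos) (E \<inter> C) \<le> measure_pmf.prob (Psi Pos) E"
    by (rule measure_pmf.finite_measure_mono) auto
  have "ennreal (prob {\<omega> \<in> space M. Xi Pos \<omega> \<in> E}) = ennreal (measure_pmf.prob (Psi Pos) (E \<inter> C))"
    using key[of E] by (simp add: emeasure_eq_measure measure_pmf.emeasure_eq_measure)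
  hence "prob {\<omega> \<in> space M. Xi Pos \<omega> \<in> E} = measure_pmf.prob (Psi Pos) (E \<inter> C)"
    by (simp add: ennreal_inj)
  thus ?thesis using le ge by simp
qed

lemma law_AB:
  assumes fin: "finite Pos"
    and w01: "\<And>a z. a \<in> Pos \<Longrightarrow> z \<in> Vec01 \<Longrightarrow> w a z \<in> {(0,0),(1,0),(0,1)}"
  shows "map_pmf (\<lambda>\<xi>. \<Sum>a\<in>Pos. \<Sum>r<fst (\<xi> a). w a (snd (\<xi> a) r)) (Psi Pos)
     = pair_pmf (poi (\<Sum>a\<in>Pos. \<mu> * pmf (map_pmf (w a) nu) (1,0))) (poi (\<Sum>a\<in>Pos. \<mu> * pmf (map_pmf (w a) nu) (0,1)))"
  unfolding Psi_def
proof (rule aggregate[OF fin, where g = "\<lambda>a x. \<Sum>r<fst x. w a (snd x r)"])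
  fix a assume a: "a \<in> Pos"
  have supp: "set_pmf (map_pmf (w a) nu) \<subseteq> {(0,0),(1,0),(0,1)}"
  proof
    fix c assume "c \<in> set_pmf (map_pmf (w a) nu)"
    then obtain z where "z \<in> set_pmf nu" "c = w a z" by auto
    thus "c \<in> {(0,0),(1,0),(0,1)}" using set_pmf_nu w01[OF a] by blast
  qed
  have "map_pmf (\<lambda>x. \<Sum>r<fst x. w a (snd x r)) Psi1
      = bind_pmf (poisson_pmf \<mu>) (\<lambda>n. map_pmf (\<lambda>\<zeta>. \<Sum>r<n. (w a \<circ> \<zeta>) r) (Pi_pmf {..<n} undefined (\<lambda>_. nu)))"
    unfolding Psi1_def map_bind_pmf map_pmf_comp by simp
  also have "\<dots> = bind_pmf (poisson_pmf \<mu>) (\<lambda>n. map_pmf (\<lambda>\<zeta>. \<Sum>r<n. \<zeta> r) (Pi_pmf {..<n} (w a undefined) (\<lambda>_. map_pmf (w a) nu)))"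
  proof (intro bind_pmf_cong refl)
    fix n :: nat
    have "Pi_pmf {..<n} (w a undefined) (\<lambda>_. map_pmf (w a) nu) = map_pmf (\<lambda>h. w a \<circ> h) (Pi_pmf {..<n} undefined (\<lambda>_. nu))"
      by (rule Pi_pmf_map) auto
    thus "map_pmf (\<lambda>\<zeta>. \<Sum>r<n. (w a \<circ> \<zeta>) r) (Pi_pmf {..<n} undefined (\<lambda>_. nu))
        = map_pmf (\<lambda>\<zeta>. \<Sum>r<n. \<zeta> r) (Pi_pmf {..<n} (w a undefined) (\<lambda>_. map_pmf (w a) nu))"
      by (simp add: map_pmf_comp)
  qed
  also have "\<dots> = pair_pmf (poi (\<mu> * pmf (map_pmf (w a) nu) (1,0))) (poi (\<mu> * pmf (map_pmf (w a) nu) (0,1)))"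
    by (rule thinning[OF supp mu_pos])
  finally show "map_pmf (\<lambda>x. \<Sum>r<fst x. w a (snd x r)) Psi1 = \<dots>" .
  show "0 \<le> \<mu> * pmf (map_pmf (w a) nu) (1,0) \<and> 0 \<le> \<mu> * pmf (map_pmf (w a) nu) (0,1)"
    using mu_pos by simp
qed

end


context inma_setup
begin

lemma nuV: "measure_pmf.prob nu A = measure_pmf.prob nu (A \<inter> Vec01)"
  using set_pmf_nu by (metis inf.absorb_iff2 measure_Int_set_pmf inf_assoc)

lemma nu_comp: assumes "ij \<in> Ix"
  shows "measure_pmf.prob nu {z. z ij = 1} = prob {\<omega> \<in> space M. Z (0,0,1) ij \<omega> = 1}"
  unfolding prob_nu using assms by (simp add: Zvec_def)

lemma nu_comp2: assumes "ij \<in> Ix" "ij' \<in> Ix"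
  shows "measure_pmf.prob nu {z. z ij = 1 \<and> z ij' = 1} = inma_p M Z ij ij'"
  unfolding prob_nu inma_p_def using assms by (simp add: Zvec_def)

lemma Vec01_val: "z \<in> Vec01 \<Longrightarrow> ij \<in> Ix \<Longrightarrow> z ij = 0 \<or> z ij = 1"
  unfolding Vec01_def by (auto simp: PiE_iff)

end

lemma sum_1_Suc: "(\<Sum>r\<in>{1..n}. f r) = (\<Sum>r<n. f (Suc r :: nat))"
  using sum.atLeast1_atMost_eq[of f n] by simp

theorem corollary1:
  fixes M :: "'a measure"
    and q1 q2 :: nat
    and \<beta> :: "nat \<Rightarrow> nat \<Rightarrow> real"
    and \<mu> :: real
    and eps :: "int \<times> int \<Rightarrow> 'a \<Rightarrow> nat"
    and Z :: "int \<times> int \<times> nat \<Rightarrow> nat \<times> nat \<Rightarrow> 'a \<Rightarrow> nat"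
    and k l :: nat and s t :: int
  assumes P: "prob_space M"
    and q: "q1 + q2 \<ge> 1"
    and beta_range: "\<And>i j. i \<le> q1 \<Longrightarrow> j \<le> q2 \<Longrightarrow> 0 \<le> \<beta> i j \<and> \<beta> i j \<le> 1"
    and beta_nz: "\<exists>i\<le>q1. \<exists>j\<le>q2. \<beta> i j \<noteq> 0"
    and mu_pos: "\<mu> > 0"
    and eps_indep: "prob_space.indep_vars M (\<lambda>_. count_space UNIV) eps UNIV"
    and eps_poisson: "\<And>st. distr M (count_space UNIV) (eps st) = measure_pmf (poisson_pmf \<mu>)"
    and Z_01: "\<And>str ij \<omega>. \<omega> \<in> space M \<Longrightarrow> Z str ij \<omega> \<le> 1"
    and Z_indep: "prob_space.indep_vars M (\<lambda>_. PiM ({..q1} \<times> {..q2}) (\<lambda>_. count_space UNIV))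
                    (Zvec q1 q2 Z) (UNIV \<times> UNIV \<times> {1..})"
    and Z_ident: "\<And>s' t' r. r \<ge> 1 \<Longrightarrow>
                    distr M (PiM ({..q1} \<times> {..q2}) (\<lambda>_. count_space UNIV)) (Zvec q1 q2 Z (s', t', r))
                  = distr M (PiM ({..q1} \<times> {..q2}) (\<lambda>_. count_space UNIV)) (Zvec q1 q2 Z (0, 0, 1))"
    and Z_bern: "\<And>i j. i \<le> q1 \<Longrightarrow> j \<le> q2 \<Longrightarrow>
                    measure M {\<omega> \<in> space M. Z (0, 0, 1) (i, j) \<omega> = 1} = \<beta> i j"
    and eps_Z_indep: "prob_space.indep_set M
                    (sets (vimage_algebra (space M) (\<lambda>\<omega> st. eps st \<omega>)
                       (PiM UNIV (\<lambda>_. count_space UNIV))))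
                    (sets (vimage_algebra (space M) (\<lambda>\<omega>. \<lambda>str\<in>UNIV \<times> UNIV \<times> {1..}. Zvec q1 q2 Z str \<omega>)
                       (PiM (UNIV \<times> UNIV \<times> {1..}) (\<lambda>_. PiM ({..q1} \<times> {..q2}) (\<lambda>_. count_space UNIV)))))"
    and kl: "k \<le> q1" "l \<le> q2"
  defines "X \<equiv> inma_X q1 q2 eps Z"
    and "m \<equiv> 2 * \<mu> * beta_bullet q1 q2 \<beta> * (1 - inma_rho M q1 q2 \<beta> Z k l)"
  shows "(\<forall>j::nat.
            measure M {\<omega> \<in> space M. X s t \<omega> = X (s - int k) (t - int l) \<omega> + j} = exp (- m) * besselI j m
          \<and> measure M {\<omega> \<in> space M. X s t \<omega> + j = X (s - int k) (t - int l) \<omega>} = exp (- m) * besselI j m)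
       \<and> measure M {\<omega> \<in> space M. X s t \<omega> < X (s - int k) (t - int l) \<omega>} = (1 - exp (- m) * besselI 0 m) / 2
       \<and> measure M {\<omega> \<in> space M. X s t \<omega> > X (s - int k) (t - int l) \<omega>} = (1 - exp (- m) * besselI 0 m) / 2"

proof -
  interpret L: inma_setup M q1 q2 \<mu> eps Z
    by (rule inma_setup.intro; fact)
  define Ix where "Ix = {..q1} \<times> {..q2}"
  define f1 where "f1 = (\<lambda>(i::nat, j::nat). (s - int i, t - int j))"
  define f2 where "f2 = (\<lambda>(i::nat, j::nat). (s - int k - int i, t - int l - int j))"
  define Win1 where "Win1 = f1 ` Ix"
  define Win2 where "Win2 = f2 ` Ix"
  define Pos where "Pos = Win1 \<union> Win2"
  define U where "U = (\<lambda>a (z::nat \<times> nat \<Rightarrow> nat). if a \<in> Win1 then z (nat (s - fst a), nat (t - snd a)) else 0)"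
  define V where "V = (\<lambda>a (z::nat \<times> nat \<Rightarrow> nat). if a \<in> Win2 then z (nat (s - int k - fst a), nat (t - int l - snd a)) else 0)"
  define w where "w = (\<lambda>a z. (U a z - min (U a z) (V a z), V a z - min (U a z) (V a z)))"
  define HW where "HW = (\<lambda>\<xi>::int \<times> int \<Rightarrow> nat \<times> (nat \<Rightarrow> nat \<times> nat \<Rightarrow> nat). \<Sum>a\<in>Pos. \<Sum>r<fst (\<xi> a). w a (snd (\<xi> a) r))"
  define HC where "HC = (\<lambda>\<xi>::int \<times> int \<Rightarrow> nat \<times> (nat \<Rightarrow> nat \<times> nat \<Rightarrow> nat). \<Sum>a\<in>Pos. \<Sum>r<fst (\<xi> a). min (U a (snd (\<xi> a) r)) (V a (snd (\<xi> a) r)))"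
  define LA where "LA = (\<Sum>a\<in>Pos. \<mu> * pmf (map_pmf (w a) L.nu) (1,0))"
  define LB where "LB = (\<Sum>a\<in>Pos. \<mu> * pmf (map_pmf (w a) L.nu) (0,1))"
  have finIx: "finite Ix" unfolding Ix_def by simp
  have inj1: "inj_on f1 Ix" unfolding f1_def by (auto simp: inj_on_def)
  have inj2: "inj_on f2 Ix" unfolding f2_def by (auto simp: inj_on_def)
  have finPos: "finite Pos" unfolding Pos_def Win1_def Win2_def using finIx by simp
  have nePos: "Pos \<noteq> {}" unfolding Pos_def Win1_def Ix_def by auto
  have XU: "X s t \<omega> = (\<Sum>a\<in>Pos. \<Sum>r<fst (L.Xi Pos \<omega> a). U a (snd (L.Xi Pos \<omega> a) r))" for \<omega>
  proof -
    have "(\<Sum>a\<in>Pos. \<Sum>r<fst (L.Xi Pos \<omega> a). U a (snd (L.Xi Pos \<omega> a) r))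
        = (\<Sum>a\<in>Pos. \<Sum>r<eps a \<omega>. U a (Zvec q1 q2 Z (fst a, snd a, Suc r) \<omega>))"
      by (intro sum.cong refl) (auto simp: L.Xi_def)
    also have "\<dots> = (\<Sum>a\<in>Win1. \<Sum>r<eps a \<omega>. U a (Zvec q1 q2 Z (fst a, snd a, Suc r) \<omega>))"
      by (rule sum.mono_neutral_right[OF finPos]) (auto simp: Pos_def U_def)
    also have "\<dots> = (\<Sum>(i,j)\<in>Ix. \<Sum>r<eps (s - int i, t - int j) \<omega>. Z (s - int i, t - int j, Suc r) (i,j) \<omega>)"
      unfolding Win1_def
    proof (rule sum.reindex_cong[OF inj1 refl])
      fix x assume x: "x \<in> Ix"
      obtain i j where ij: "x = (i,j)" by (cases x)
      have "f1 x \<in> f1 ` Ix" using x by simp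
      thus "(\<Sum>r<eps (f1 x) \<omega>. U (f1 x) (Zvec q1 q2 Z (fst (f1 x), snd (f1 x), Suc r) \<omega>))
          = (case x of (i, j) \<Rightarrow> \<Sum>r<eps (s - int i, t - int j) \<omega>. Z (s - int i, t - int j, Suc r) (i, j) \<omega>)"
        using x unfolding ij by (simp add: f1_def U_def Win1_def Zvec_def Ix_def)
    qed
    also have "\<dots> = X s t \<omega>"
      unfolding X_def inma_X_def sum_1_Suc Ix_def sum.cartesian_product ..
    finally show ?thesis ..
  qed
  have XV: "X (s - int k) (t - int l) \<omega> = (\<Sum>a\<in>Pos. \<Sum>r<fst (L.Xi Pos \<omega> a). V a (snd (L.Xi Pos \<omega> a) r))" for \<omega>
  proof -
    have "(\<Sum>a\<in>Pos. \<Sum>r<fst (L.Xi Pos \<omega> a). V a (snd (L.Xi Pos \<omega> a) r))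
        = (\<Sum>a\<in>Pos. \<Sum>r<eps a \<omega>. V a (Zvec q1 q2 Z (fst a, snd a, Suc r) \<omega>))"
      by (intro sum.cong refl) (auto simp: L.Xi_def)
    also have "\<dots> = (\<Sum>a\<in>Win2. \<Sum>r<eps a \<omega>. V a (Zvec q1 q2 Z (fst a, snd a, Suc r) \<omega>))"
      by (rule sum.mono_neutral_right[OF finPos]) (auto simp: Pos_def V_def)
    also have "\<dots> = (\<Sum>(i,j)\<in>Ix. \<Sum>r<eps (s - int k - int i, t - int l - int j) \<omega>. Z (s - int k - int i, t - int l - int j, Suc r) (i,j) \<omega>)"
      unfolding Win2_def
    proof (rule sum.reindex_cong[OF inj2 refl])
      fix x assume x: "x \<in> Ix"
      obtain i j where ij: "x = (i,j)" by (cases x)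
      have "f2 x \<in> f2 ` Ix" using x by simp
      thus "(\<Sum>r<eps (f2 x) \<omega>. V (f2 x) (Zvec q1 q2 Z (fst (f2 x), snd (f2 x), Suc r) \<omega>))
          = (case x of (i, j) \<Rightarrow> \<Sum>r<eps (s - int k - int i, t - int l - int j) \<omega>. Z (s - int k - int i, t - int l - int j, Suc r) (i, j) \<omega>)"
        using x unfolding ij by (simp add: f2_def V_def Win2_def Zvec_def Ix_def)
    qed
    also have "\<dots> = X (s - int k) (t - int l) \<omega>"
      unfolding X_def inma_X_def sum_1_Suc Ix_def sum.cartesian_product ..
    finally show ?thesis ..
  qed
  have UV: "(\<Sum>a\<in>Pos. \<Sum>r<fst (\<xi> a). U a (snd (\<xi> a) r)) = fst (HW \<xi>) + HC \<xi>"
           "(\<Sum>a\<in>Pos. \<Sum>r<fst (\<xi> a). V a (snd (\<xi> a) r)) = snd (HW \<xi>) + HC \<xi>" for \<xi>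
    unfolding HW_def HC_def fst_sum snd_sum sum.distrib[symmetric] by (auto simp: w_def intro!: sum.cong)
  have U01: "U a z = 0 \<or> U a z = 1" if z: "z \<in> L.Vec01" for a z
  proof (cases "a \<in> Win1")
    case True
    then obtain i j where ij: "(i,j) \<in> Ix" "a = f1 (i,j)" unfolding Win1_def by auto
    hence "U a z = z (i,j)" using True by (simp add: U_def f1_def)
    thus ?thesis using L.Vec01_val[OF z, of "(i,j)"] ij(1) by (simp add: Ix_def)
  next
    case False thus ?thesis by (simp add: U_def)
  qed
  have V01: "V a z = 0 \<or> V a z = 1" if z: "z \<in> L.Vec01" for a z
  proof (cases "a \<in> Win2")
    case True
    then obtain i j where ij: "(i,j) \<in> Ix" "a = f2 (i,j)" unfolding Win2_def by auto
    hence "V a z = z (i,j)" using True by (simp add: V_def f2_def)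
    thus ?thesis using L.Vec01_val[OF z, of "(i,j)"] ij(1) by (simp add: Ix_def)
  next
    case False thus ?thesis by (simp add: V_def)
  qed
  have w01: "w a z \<in> {(0,0),(1,0),(0,1)}" if "a \<in> Pos" "z \<in> L.Vec01" for a z
    using U01[OF that(2), of a] V01[OF that(2), of a] by (auto simp: w_def)
  have law: "map_pmf HW (L.Psi Pos) = pair_pmf (poi LA) (poi LB)"
    unfolding HW_def LA_def LB_def by (rule L.law_AB[OF finPos w01])
  define SP where "SP = (\<Sum>i\<in>{k..q1}. \<Sum>j\<in>{l..q2}. inma_p M Z (i, j) (i - k, j - l))"
  define pU where "pU = (\<lambda>a. measure_pmf.prob L.nu {z. U a z = 1})"
  define pV where "pV = (\<lambda>a. measure_pmf.prob L.nu {z. V a z = 1})"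
  define pUV where "pUV = (\<lambda>a. measure_pmf.prob L.nu {z. U a z = 1 \<and> V a z = 1})"
  have pA: "pmf (map_pmf (w a) L.nu) (1,0) = pU a - pUV a" for a
  proof -
    have "pmf (map_pmf (w a) L.nu) (1,0) = measure_pmf.prob L.nu (w a -` {(1,0)} \<inter> L.Vec01)"
      unfolding pmf_map by (rule L.nuV)
    also have "w a -` {(1,0)} \<inter> L.Vec01 = ({z. U a z = 1} \<inter> L.Vec01) - ({z. U a z = 1 \<and> V a z = 1} \<inter> L.Vec01)"
    proof (intro set_eqI)
      fix z show "z \<in> w a -` {(1,0)} \<inter> L.Vec01 \<longleftrightarrow> z \<in> ({z. U a z = 1} \<inter> L.Vec01) - ({z. U a z = 1 \<and> V a z = 1} \<inter> L.Vec01)"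
        by (cases "z \<in> L.Vec01") (use U01[of z a] V01[of z a] in \<open>auto simp: w_def\<close>)
    qed
    also have "measure_pmf.prob L.nu (({z. U a z = 1} \<inter> L.Vec01) - ({z. U a z = 1 \<and> V a z = 1} \<inter> L.Vec01))
       = measure_pmf.prob L.nu ({z. U a z = 1} \<inter> L.Vec01) - measure_pmf.prob L.nu ({z. U a z = 1 \<and> V a z = 1} \<inter> L.Vec01)"
      by (rule measure_pmf.finite_measure_Diff) auto
    also have "\<dots> = pU a - pUV a" unfolding pU_def pUV_def L.nuV[symmetric] ..
    finally show ?thesis .
  qed
  have pB: "pmf (map_pmf (w a) L.nu) (0,1) = pV a - pUV a" for a
  proof -
    have "pmf (map_pmf (w a) L.nu) (0,1) = measure_pmf.prob L.nu (w a -` {(0,1)} \<inter> L.Vec01)"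
      unfolding pmf_map by (rule L.nuV)
    also have "w a -` {(0,1)} \<inter> L.Vec01 = ({z. V a z = 1} \<inter> L.Vec01) - ({z. U a z = 1 \<and> V a z = 1} \<inter> L.Vec01)"
    proof (intro set_eqI)
      fix z show "z \<in> w a -` {(0,1)} \<inter> L.Vec01 \<longleftrightarrow> z \<in> ({z. V a z = 1} \<inter> L.Vec01) - ({z. U a z = 1 \<and> V a z = 1} \<inter> L.Vec01)"
        by (cases "z \<in> L.Vec01") (use U01[of z a] V01[of z a] in \<open>auto simp: w_def\<close>)
    qed
    also have "measure_pmf.prob L.nu (({z. V a z = 1} \<inter> L.Vec01) - ({z. U a z = 1 \<and> V a z = 1} \<inter> L.Vec01))
       = measure_pmf.prob L.nu ({z. V a z = 1} \<inter> L.Vec01) - measure_pmf.prob L.nu ({z. U a z = 1 \<and> V a z = 1} \<inter> L.Vec01)"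
      by (rule measure_pmf.finite_measure_Diff) auto
    also have "\<dots> = pV a - pUV a" unfolding pV_def pUV_def L.nuV[symmetric] ..
    finally show ?thesis .
  qed
  have betaI: "(\<Sum>x\<in>Ix. measure_pmf.prob L.nu {z. z x = 1}) = beta_bullet q1 q2 \<beta>"
  proof -
    have "(\<Sum>x\<in>Ix. measure_pmf.prob L.nu {z. z x = 1}) = (\<Sum>x\<in>Ix. \<beta> (fst x) (snd x))"
    proof (intro sum.cong refl)
      fix x assume x: "x \<in> Ix"
      obtain i j where ij: "x = (i,j)" by (cases x)
      show "measure_pmf.prob L.nu {z. z x = 1} = \<beta> (fst x) (snd x)"
        using x Z_bern[of i j] unfolding ij by (subst L.nu_comp) (auto simp: Ix_def)
    qed
    also have "\<dots> = beta_bullet q1 q2 \<beta>"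
      unfolding beta_bullet_def Ix_def sum.cartesian_product by (simp add: case_prod_beta')
    finally show ?thesis .
  qed
  have sU: "(\<Sum>a\<in>Pos. pU a) = beta_bullet q1 q2 \<beta>"
  proof -
    have "(\<Sum>a\<in>Pos. pU a) = (\<Sum>a\<in>Win1. pU a)"
      by (rule sum.mono_neutral_right[OF finPos]) (auto simp: Pos_def pU_def U_def)
    also have "\<dots> = (\<Sum>x\<in>Ix. measure_pmf.prob L.nu {z. z x = 1})"
      unfolding Win1_def
    proof (rule sum.reindex_cong[OF inj1 refl])
      fix x assume x: "x \<in> Ix"
      obtain i j where ij: "x = (i,j)" by (cases x)
      have "f1 x \<in> Win1" using x by (simp add: Win1_def)
      thus "pU (f1 x) = measure_pmf.prob L.nu {z. z x = 1}"
        unfolding pU_def U_def ij by (simp add: f1_def)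
    qed
    finally show ?thesis using betaI by simp
  qed
  have sV: "(\<Sum>a\<in>Pos. pV a) = beta_bullet q1 q2 \<beta>"
  proof -
    have "(\<Sum>a\<in>Pos. pV a) = (\<Sum>a\<in>Win2. pV a)"
      by (rule sum.mono_neutral_right[OF finPos]) (auto simp: Pos_def pV_def V_def)
    also have "\<dots> = (\<Sum>x\<in>Ix. measure_pmf.prob L.nu {z. z x = 1})"
      unfolding Win2_def
    proof (rule sum.reindex_cong[OF inj2 refl])
      fix x assume x: "x \<in> Ix"
      obtain i j where ij: "x = (i,j)" by (cases x)
      have "f2 x \<in> Win2" using x by (simp add: Win2_def)
      thus "pV (f2 x) = measure_pmf.prob L.nu {z. z x = 1}"
        unfolding pV_def V_def ij by (simp add: f2_def)
    qed
    finally show ?thesis using betaI by simp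
  qed
  define K where "K = {k..q1} \<times> {l..q2}"
  have injK: "inj_on f1 K" unfolding f1_def by (auto simp: inj_on_def)
  have W12: "Win1 \<inter> Win2 = f1 ` K"
  proof (intro set_eqI iffI)
    fix a assume "a \<in> Win1 \<inter> Win2"
    then obtain i j i' j' where "(i,j) \<in> Ix" "(i',j') \<in> Ix" "a = f1 (i,j)" "a = f2 (i',j')"
      unfolding Win1_def Win2_def by auto
    hence "i = k + i'" "j = l + j'" "(i,j) \<in> Ix" "a = f1 (i,j)" by (auto simp: f1_def f2_def)
    thus "a \<in> f1 ` K" by (auto simp: K_def Ix_def)
  next
    fix a assume "a \<in> f1 ` K"
    then obtain i j where ij: "(i,j) \<in> K" "a = f1 (i,j)" by auto
    hence "a = f2 (i - k, j - l)" "(i - k, j - l) \<in> Ix" "(i,j) \<in> Ix" by (auto simp: f1_def f2_def K_def Ix_def)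
    hence "a \<in> f2 ` Ix" "a \<in> f1 ` Ix" using ij(2) by (metis imageI)+
    thus "a \<in> Win1 \<inter> Win2" by (simp add: Win1_def Win2_def)
  qed
  have sUV: "(\<Sum>a\<in>Pos. pUV a) = SP"
  proof -
    have "(\<Sum>a\<in>Pos. pUV a) = (\<Sum>a\<in>Win1 \<inter> Win2. pUV a)"
      by (rule sum.mono_neutral_right[OF finPos]) (auto simp: Pos_def pUV_def U_def V_def)
    also have "\<dots> = (\<Sum>x\<in>K. inma_p M Z x (fst x - k, snd x - l))"
      unfolding W12
    proof (rule sum.reindex_cong[OF injK refl])
      fix x assume x: "x \<in> K"
      obtain i j where ij: "x = (i,j)" by (cases x)
      have in12: "f1 x \<in> Win1" "f1 x \<in> Win2" using x W12 by (auto simp: Win1_def K_def Ix_def)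
      have ik: "k \<le> i" "l \<le> j" "i \<le> q1" "j \<le> q2" using x ij by (auto simp: K_def)
      have "nat (s - int k - (s - int i)) = i - k" "nat (t - int l - (t - int j)) = j - l" using ik by auto
      hence "pUV (f1 x) = measure_pmf.prob L.nu {z. z (i,j) = 1 \<and> z (i - k, j - l) = 1}"
        unfolding pUV_def U_def V_def using in12 unfolding ij by (simp add: f1_def)
      also have "\<dots> = inma_p M Z (i,j) (i - k, j - l)"
        by (rule L.nu_comp2) (use ik in auto)
      finally show "pUV (f1 x) = inma_p M Z x (fst x - k, snd x - l)" unfolding ij by simp
    qed
    also have "\<dots> = SP" unfolding SP_def K_def sum.cartesian_product by (simp add: case_prod_beta')
    finally show ?thesis .
  qed
  have bne: "beta_bullet q1 q2 \<beta> \<noteq> 0"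
  proof
    assume b0: "beta_bullet q1 q2 \<beta> = 0"
    obtain i0 j0 where ij0: "i0 \<le> q1" "j0 \<le> q2" "\<beta> i0 j0 \<noteq> 0" using beta_nz by auto
    have "(\<Sum>x\<in>Ix. \<beta> (fst x) (snd x)) = 0"
      using b0 unfolding beta_bullet_def Ix_def sum.cartesian_product by (simp add: case_prod_beta')
    hence "\<forall>x\<in>Ix. \<beta> (fst x) (snd x) = 0"
      by (subst (asm) sum_nonneg_eq_0_iff[OF finIx]) (use beta_range in \<open>auto simp: Ix_def\<close>)
    thus False using ij0 by (auto simp: Ix_def)
  qed
  have mdef: "m = 2 * \<mu> * (beta_bullet q1 q2 \<beta> - SP)"
    unfolding m_def inma_rho_def SP_def using bne by (simp add: field_simps)
  have LAm: "LA = m / 2"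
    unfolding LA_def pA mdef sum_distrib_left[symmetric] sum_subtractf sU sUV by simp
  have LBm: "LB = m / 2"
    unfolding LB_def pB mdef sum_distrib_left[symmetric] sum_subtractf sV sUV by simp
  have LA0: "0 \<le> LA" unfolding LA_def using mu_pos by (auto intro: sum_nonneg)
  have evt: "measure M {\<omega> \<in> space M. HW (L.Xi Pos \<omega>) \<in> S} = measure_pmf.prob (pair_pmf (poi (m/2)) (poi (m/2))) S" for S
  proof -
    have "measure M {\<omega> \<in> space M. HW (L.Xi Pos \<omega>) \<in> S} = measure M {\<omega> \<in> space M. L.Xi Pos \<omega> \<in> HW -` S}" by simp
    also have "\<dots> = measure_pmf.prob (L.Psi Pos) (HW -` S)" by (rule L.Xi_dist[OF finPos nePos])
    also have "\<dots> = measure_pmf.prob (map_pmf HW (L.Psi Pos)) S" by (simp add: measure_map_pmf)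
    also have "\<dots> = measure_pmf.prob (pair_pmf (poi (m/2)) (poi (m/2))) S" unfolding law LAm LBm ..
    finally show ?thesis .
  qed
  have XH: "X s t \<omega> = fst (HW (L.Xi Pos \<omega>)) + HC (L.Xi Pos \<omega>)" for \<omega> using XU UV(1) by simp
  have XH': "X (s - int k) (t - int l) \<omega> = snd (HW (L.Xi Pos \<omega>)) + HC (L.Xi Pos \<omega>)" for \<omega> using XV UV(2) by simp
  have l0: "0 \<le> m/2" using LA0 LAm by simp
  have m2: "m = 2 * (m/2)" by simp
  note sk = skellam_all[OF l0 m2]
  have e1: "measure M {\<omega> \<in> space M. X s t \<omega> = X (s - int k) (t - int l) \<omega> + j} = exp (- m) * besselI j m" for j
  proof -
    have "{\<omega> \<in> space M. X s t \<omega> = X (s - int k) (t - int l) \<omega> + j} = {\<omega> \<in> space M. HW (L.Xi Pos \<omega>) \<in> {(u,v). u = v + j}}"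
      unfolding XH XH' by (auto simp: case_prod_unfold)
    thus ?thesis by (simp only: evt sk(1))
  qed
  have e2: "measure M {\<omega> \<in> space M. X s t \<omega> + j = X (s - int k) (t - int l) \<omega>} = exp (- m) * besselI j m" for j
  proof -
    have "{\<omega> \<in> space M. X s t \<omega> + j = X (s - int k) (t - int l) \<omega>} = {\<omega> \<in> space M. HW (L.Xi Pos \<omega>) \<in> {(u,v). u + j = v}}"
      unfolding XH XH' by (auto simp: case_prod_unfold)
    thus ?thesis by (simp only: evt sk(2))
  qed
  have e3: "measure M {\<omega> \<in> space M. X s t \<omega> < X (s - int k) (t - int l) \<omega>} = (1 - exp (- m) * besselI 0 m) / 2"
  proof -
    have "{\<omega> \<in> space M. X s t \<omega> < X (s - int k) (t - int l) \<omega>} = {\<omega> \<in> space M. HW (L.Xi Pos \<omega>) \<in> {(u,v). u < v}}"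
      unfolding XH XH' by (auto simp: case_prod_unfold)
    thus ?thesis by (simp only: evt sk(3))
  qed
  have e4: "measure M {\<omega> \<in> space M. X s t \<omega> > X (s - int k) (t - int l) \<omega>} = (1 - exp (- m) * besselI 0 m) / 2"
  proof -
    have "{\<omega> \<in> space M. X s t \<omega> > X (s - int k) (t - int l) \<omega>} = {\<omega> \<in> space M. HW (L.Xi Pos \<omega>) \<in> {(u,v). v < u}}"
      unfolding XH XH' by (auto simp: case_prod_unfold)
    thus ?thesis by (simp only: evt sk(4))
  qed
  show ?thesis using e1 e2 e3 e4 by simp
qed

end
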